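(* In the stochastic epidemic model described in the context, let $a\in\mathcal A_i$, $b\in\mathcal A_j$ be distinct nodes and $t\ge0$. Let $T\in[0,t]$ be such that $t-T$ is the time of the last update of $1_{(a,b)}$ during $[0,t]$ ($T=t$ if none), and let $K:=t-\min\{t,\inf\{\tau\ge0:b\in\mathcal I(\tau)\}\}$ (with $\inf\emptyset=\infty$). Then $K$ is independent of the pair $(T,1_{(a,b)}(t))$.
   Context: Stochastic epidemic model with population size $n$: node set $[n]$ partitioned into age groups $\mathcal A_1,\dots,\mathcal A_m$; parameters $B_{ij}\ge0$, $\rho_{ij}>0$ with $\rho_{ij}/n\le1$, $\gamma_i>0$, $\lambda>0$. A state consists of disease states $x_a\in\{0,1,-1\}$ (susceptible, infected, recovered), edge states $1_{(a,b)}\in\{0,1\}$ for ordered pairs of distinct nodes ($1$ = directed edge from $b$ to $a$), and auxiliary bits flipped at each update of a pair's edge state. $\{\mathbf X(t)\}$ is a right-continuous time-homogeneous continuous-time Markov chain with only these transitions: susceptible $a\in\mathcal A_i$ becomes infected at rate $\sum_kB_{ik}\sum_{c\in\mathcal I_k}1_{(a,c)}$ (with $\mathcal I_k$ the currently infected nodes of $\mathcal A_k$); infected $a\in\mathcal A_i$ recovers at rate $\gamma_i$; the edge state of $(a,b)\in\mathcal A_i\times\mathcal A_j$ is updated to $1$ at rate $\lambda\rho_{ij}/n$ and to $0$ at rate $\lambda(1-\rho_{ij}/n)$ (auxiliary bit flipped each time). $\mathcal I(\tau)$ is the set of infected nodes at time $\tau$ and $1_{(a,b)}(t)$ the edge state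 of $(a,b)$ at time $t$. The initial state $\mathbf X(0)$ is deterministic. *)

theory Defs
  imports "HOL-Probability.Probability"
begin

text \<open>A state: disease states (nat => int: 0 susceptible, 1 infected, -1 recovered),
  edge states on ordered pairs (a,b) (True = directed edge from b to a),
  and auxiliary bits on ordered pairs (flipped at each update of the edge state).\<close>

type_synonym state = "(nat \<Rightarrow> int) \<times> (nat \<times> nat \<Rightarrow> bool) \<times> (nat \<times> nat \<Rightarrow> bool)"

definition dis :: "state \<Rightarrow> nat \<Rightarrow> int" where "dis s = fst s"
definition edge :: "state \<Rightarrow> nat \<times> nat \<Rightarrow> bool" where "edge s = fst (snd s)"
definition aux :: "state \<Rightarrow> nat \<times> nat \<Rightarrow> bool" where "aux s = snd (snd s)"

definition valid_states :: "nat \<Rightarrow> state set" where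
  "valid_states n = {s. (\<forall>a. dis s a \<in> {-1,0,1} \<and> (a \<ge> n \<longrightarrow> dis s a = 0))
      \<and> (\<forall>a b. \<not> (a < n \<and> b < n \<and> a \<noteq> b) \<longrightarrow> \<not> edge s (a,b) \<and> \<not> aux s (a,b))}"

definition set_dis :: "state \<Rightarrow> nat \<Rightarrow> int \<Rightarrow> state" where
  "set_dis s a v = ((dis s)(a := v), edge s, aux s)"

definition upd_edge :: "state \<Rightarrow> nat \<Rightarrow> nat \<Rightarrow> bool \<Rightarrow> state" where
  "upd_edge s a b v = (dis s, (edge s)((a,b) := v), (aux s)((a,b) := \<not> aux s (a,b)))"

definition infection_rate ::
  "nat \<Rightarrow> nat \<Rightarrow> (nat \<Rightarrow> nat) \<Rightarrow> (nat \<Rightarrow> nat \<Rightarrow> real) \<Rightarrow> state \<Rightarrow> nat \<Rightarrow> real" where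
  "infection_rate n m grp B s a =
     (\<Sum>k<m. B (grp a) k * real (card {c. c < n \<and> grp c = k \<and> dis s c = 1 \<and> edge s (a,c)}))"

definition trans_rate ::
  "nat \<Rightarrow> nat \<Rightarrow> (nat \<Rightarrow> nat) \<Rightarrow> (nat \<Rightarrow> nat \<Rightarrow> real) \<Rightarrow> (nat \<Rightarrow> nat \<Rightarrow> real)
   \<Rightarrow> (nat \<Rightarrow> real) \<Rightarrow> real \<Rightarrow> state \<Rightarrow> state \<Rightarrow> real" where
  "trans_rate n m grp B \<rho> \<gamma> lam s s' =
     (\<Sum>a<n. if dis s a = 0 \<and> s' = set_dis s a 1 then infection_rate n m grp B s a else 0)
   + (\<Sum>a<n. if dis s a = 1 \<and> s' = set_dis s a (-1) then \<gamma> (grp a) else 0)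
   + (\<Sum>a<n. \<Sum>b<n. if a \<noteq> b \<and> s' = upd_edge s a b True
                        then lam * \<rho> (grp a) (grp b) / real n else 0)
   + (\<Sum>a<n. \<Sum>b<n. if a \<noteq> b \<and> s' = upd_edge s a b False
                        then lam * (1 - \<rho> (grp a) (grp b) / real n) else 0)"

definition generator ::
  "nat \<Rightarrow> nat \<Rightarrow> (nat \<Rightarrow> nat) \<Rightarrow> (nat \<Rightarrow> nat \<Rightarrow> real) \<Rightarrow> (nat \<Rightarrow> nat \<Rightarrow> real)
   \<Rightarrow> (nat \<Rightarrow> real) \<Rightarrow> real \<Rightarrow> state \<Rightarrow> state \<Rightarrow> real" where
  "generator n m grp B \<rho> \<gamma> lam s s' =
     (if s = s' then - (\<Sum>s''\<in>valid_states n - {s}. trans_rate n m grp B \<rho> \<gamma> lam s s'')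
      else trans_rate n m grp B \<rho> \<gamma> lam s s')"

fun mat_pow :: "state set \<Rightarrow> (state \<Rightarrow> state \<Rightarrow> real) \<Rightarrow> nat \<Rightarrow> state \<Rightarrow> state \<Rightarrow> real" where
  "mat_pow S Q 0 s s' = (if s = s' then 1 else 0)"
| "mat_pow S Q (Suc k) s s' = (\<Sum>r\<in>S. mat_pow S Q k s r * Q r s')"

definition trans_prob :: "state set \<Rightarrow> (state \<Rightarrow> state \<Rightarrow> real) \<Rightarrow> real \<Rightarrow> state \<Rightarrow> state \<Rightarrow> real" where
  "trans_prob S Q t s s' = (\<Sum>k. t ^ k / fact k * mat_pow S Q k s s')"

definition is_ctmc ::
  "'w measure \<Rightarrow> state set \<Rightarrow> (state \<Rightarrow> state \<Rightarrow> real) \<Rightarrow> state \<Rightarrow> (real \<Rightarrow> 'w \<Rightarrow> state) \<Rightarrow> bool" where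
  "is_ctmc M S Q x0 X \<longleftrightarrow>
     x0 \<in> S
   \<and> (\<forall>t\<ge>0. \<forall>s. {\<omega>\<in>space M. X t \<omega> = s} \<in> sets M)
   \<and> (\<forall>\<omega>\<in>space M. \<forall>t\<ge>0. X t \<omega> \<in> S)
   \<and> (\<forall>\<omega>\<in>space M. \<forall>t\<ge>0. \<exists>\<delta>>0. \<forall>u. t \<le> u \<and> u < t + \<delta> \<longrightarrow> X u \<omega> = X t \<omega>)
   \<and> (\<forall>k (ts :: nat \<Rightarrow> real) (ss :: nat \<Rightarrow> state).
        (\<forall>i<k. 0 \<le> ts i \<and> ss i \<in> S) \<and> (\<forall>i. Suc i < k \<longrightarrow> ts i \<le> ts (Suc i)) \<longrightarrow>
        measure M {\<omega>\<in>space M. \<forall>i<k. X (ts i) \<omega> = ss i}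
          = (\<Prod>i<k. trans_prob S Q (ts i - (if i = 0 then 0 else ts (i - 1)))
                       (if i = 0 then x0 else ss (i - 1)) (ss i)))"

text \<open>T: t minus the time of the last update of the edge state of (a,b) during [0,t]
  (updates are exactly the flips of the auxiliary bit); T = t if there is no update.\<close>
definition last_update_T :: "(real \<Rightarrow> state) \<Rightarrow> nat \<Rightarrow> nat \<Rightarrow> real \<Rightarrow> real" where
  "last_update_T p a b t =
     t - Inf {s. 0 \<le> s \<and> s \<le> t \<and> (\<forall>\<tau>. s \<le> \<tau> \<and> \<tau> \<le> t \<longrightarrow> aux (p \<tau>) (a,b) = aux (p t) (a,b))}"

definition first_infection :: "(real \<Rightarrow> state) \<Rightarrow> nat \<Rightarrow> ereal" where
  "first_infection p b = Inf {ereal \<tau> | \<tau>. 0 \<le> \<tau> \<and> dis (p \<tau>) b = 1}"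

definition K_var :: "(real \<Rightarrow> state) \<Rightarrow> nat \<Rightarrow> real \<Rightarrow> real" where
  "K_var p b t = t - real_of_ereal (min (ereal t) (first_infection p b))"

end

theory Submission
  imports Defs
begin


fun mp :: "'a set \<Rightarrow> ('a \<Rightarrow> 'a \<Rightarrow> real) \<Rightarrow> nat \<Rightarrow> 'a \<Rightarrow> 'a \<Rightarrow> real" where
  "mp S Q 0 s s' = (if s = s' then 1 else 0)"
| "mp S Q (Suc k) s s' = (\<Sum>r\<in>S. mp S Q k s r * Q r s')"

definition tp :: "'a set \<Rightarrow> ('a \<Rightarrow> 'a \<Rightarrow> real) \<Rightarrow> real \<Rightarrow> 'a \<Rightarrow> 'a \<Rightarrow> real" where
  "tp S Q t s s' = (\<Sum>k. t ^ k / fact k * mp S Q k s s')"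

lemma mat_pow_mp: "mat_pow S Q k s s' = mp S Q k s s'"
  by (induction k arbitrary: s') auto

lemma trans_prob_tp: "trans_prob S Q t s s' = tp S Q t s s'"
  unfolding trans_prob_def tp_def mat_pow_mp ..

lemma mp_bound_Suc:
  assumes "finite S"
  shows "\<exists>c\<ge>0. \<forall>k s s'. \<bar>mp S Q (Suc k) s s'\<bar> \<le> c ^ k * (\<Sum>r\<in>S. \<bar>Q r s'\<bar>)"
proof -
  define D where "D s' = (\<Sum>r\<in>S. \<bar>Q r s'\<bar>)" for s'
  define c where "c = (\<Sum>s'\<in>S. D s')"
  have D0: "D s' \<ge> 0" for s' unfolding D_def by (simp add: sum_nonneg)
  have c0: "c \<ge> 0" unfolding c_def using D0 by (simp add: sum_nonneg)
  have DS: "D s' \<le> c" if "s' \<in> S" for s'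
    unfolding c_def using that assms D0 by (intro member_le_sum) auto
  have "\<bar>mp S Q (Suc k) s s'\<bar> \<le> c ^ k * D s'" for k s s'
  proof (induction k arbitrary: s')
    case 0
    have "\<bar>mp S Q (Suc 0) s s'\<bar> = \<bar>\<Sum>r\<in>S. (if s = r then 1 else 0) * Q r s'\<bar>" by simp
    also have "\<dots> \<le> (\<Sum>r\<in>S. \<bar>(if s = r then 1 else 0) * Q r s'\<bar>)" by (rule sum_abs)
    also have "\<dots> \<le> D s'" unfolding D_def by (intro sum_mono) auto
    finally show ?case by simp
  next
    case (Suc k)
    have "\<bar>mp S Q (Suc (Suc k)) s s'\<bar> = \<bar>\<Sum>r\<in>S. mp S Q (Suc k) s r * Q r s'\<bar>" by simp
    also have "\<dots> \<le> (\<Sum>r\<in>S. \<bar>mp S Q (Suc k) s r\<bar> * \<bar>Q r s'\<bar>)"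
      using sum_abs by (metis (no_types, lifting) abs_mult sum.cong)
    also have "\<dots> \<le> (\<Sum>r\<in>S. (c ^ (Suc k)) * \<bar>Q r s'\<bar>)"
    proof (intro sum_mono mult_right_mono)
      fix r assume "r \<in> S"
      have "\<bar>mp S Q (Suc k) s r\<bar> \<le> c ^ k * D r" by (rule Suc)
      also have "\<dots> \<le> c ^ k * c" using DS[OF \<open>r \<in> S\<close>] c0 by (intro mult_left_mono) auto
      finally show "\<bar>mp S Q (Suc k) s r\<bar> \<le> c ^ Suc k" by (simp add: mult.commute)
    qed auto
    also have "\<dots> = c ^ Suc k * D s'" unfolding D_def by (simp add: sum_distrib_left)
    finally show ?case .
  qed
  then show ?thesis using c0 unfolding D_def by blast
qed

lemma mp_bound:
  assumes "finite S"
  shows "\<exists>c\<ge>0. \<forall>k s. \<bar>mp S Q k s s'\<bar> \<le> c ^ k * (1 + (\<Sum>r\<in>S. \<bar>Q r s'\<bar>))"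
proof -
  obtain c where c0: "c \<ge> 0" and c: "\<forall>k s s'. \<bar>mp S Q (Suc k) s s'\<bar> \<le> c ^ k * (\<Sum>r\<in>S. \<bar>Q r s'\<bar>)"
    using mp_bound_Suc[OF assms] by blast
  define D where "D = (\<Sum>r\<in>S. \<bar>Q r s'\<bar>)"
  have D0: "D \<ge> 0" unfolding D_def by (simp add: sum_nonneg)
  have "\<bar>mp S Q k s s'\<bar> \<le> (c+1) ^ k * (1 + D)" for k s
  proof (cases k)
    case 0 then show ?thesis using D0 by simp
  next
    case (Suc j)
    have "\<bar>mp S Q k s s'\<bar> \<le> c ^ j * D" using c Suc D_def by blast
    also have "\<dots> \<le> (c+1) ^ k * (1 + D)"
    proof (intro mult_mono)
      have "c ^ j \<le> (c+1) ^ j" using c0 by (intro power_mono) auto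
      also have "\<dots> \<le> (c+1) ^ k" using c0 Suc by (intro power_increasing) auto
      finally show "c ^ j \<le> (c+1) ^ k" .
    qed (use D0 c0 in auto)
    finally show ?thesis .
  qed
  then show ?thesis using c0 D_def by (intro exI[of _ "c+1"]) auto
qed

lemma mp_summable:
  assumes "finite S"
  shows "summable (\<lambda>k. norm (t ^ k / fact k * mp S Q k s s'))"
proof -
  obtain c where c0: "c \<ge> 0" and c: "\<forall>k s. \<bar>mp S Q k s s'\<bar> \<le> c ^ k * (1 + (\<Sum>r\<in>S. \<bar>Q r s'\<bar>))"
    using mp_bound[OF assms] by blast
  define D where "D = 1 + (\<Sum>r\<in>S. \<bar>Q r s'\<bar>)"
  have D0: "D \<ge> 0" unfolding D_def by (simp add: sum_nonneg add_nonneg_nonneg)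
  have sm: "summable (\<lambda>k. D * (inverse (fact k) * (\<bar>t\<bar> * c) ^ k))"
    by (intro summable_mult summable_exp)
  show ?thesis
  proof (rule summable_comparison_test[OF _ sm], intro exI[of _ 0] allI impI)
    fix k :: nat
    have "norm (norm (t ^ k / fact k * mp S Q k s s')) = \<bar>t\<bar> ^ k / fact k * \<bar>mp S Q k s s'\<bar>"
      by (simp add: abs_mult power_abs)
    also have "\<dots> \<le> \<bar>t\<bar> ^ k / fact k * (c ^ k * D)"
      using c D_def by (intro mult_left_mono) auto
    also have "\<dots> = D * (inverse (fact k) * (\<bar>t\<bar> * c) ^ k)"
      by (simp add: power_mult_distrib field_simps)
    finally show "norm (norm (t ^ k / fact k * mp S Q k s s')) \<le> D * (inverse (fact k) * (\<bar>t\<bar> * c) ^ k)" .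
  qed
qed


lemma pascal_sum:
  fixes c :: "nat \<Rightarrow> nat \<Rightarrow> real"
  shows "(\<Sum>i\<le>Suc k. real (Suc k choose i) * c i (Suc k - i))
       = (\<Sum>i\<le>k. real (k choose i) * (c (Suc i) (k - i) + c i (Suc k - i)))"
proof -
  have e1: "(\<Sum>i\<le>Suc k. real (Suc k choose i) * c i (Suc k - i))
      = c 0 (Suc k) + (\<Sum>j\<le>k. real (Suc k choose Suc j) * c (Suc j) (k - j))"
    by (subst sum.atMost_Suc_shift) simp
  have e2: "(\<Sum>j\<le>k. real (Suc k choose Suc j) * c (Suc j) (k - j)) = (\<Sum>j\<le>k. real (k choose j) * c (Suc j) (k - j))
                 + (\<Sum>j\<le>k. real (k choose Suc j) * c (Suc j) (k - j))"
    by (simp add: sum.distrib algebra_simps)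
  have e3: "c 0 (Suc k) + (\<Sum>j\<le>k. real (k choose Suc j) * c (Suc j) (k - j))
           = (\<Sum>i\<le>Suc k. real (k choose i) * c i (Suc k - i))"
    by (subst sum.atMost_Suc_shift) simp
  have e4: "(\<Sum>i\<le>Suc k. real (k choose i) * c i (Suc k - i)) = (\<Sum>i\<le>k. real (k choose i) * c i (Suc k - i))"
    by (simp add: sum.atMost_Suc)
  show ?thesis using e1 e2 e3 e4 by (simp add: sum.distrib algebra_simps)
qed

lemma sum_fibers:
  fixes \<phi> :: "'a \<Rightarrow> 'b" and Zf :: "'a \<Rightarrow> 'c::finite" and h :: "'a \<Rightarrow> real"
  assumes "finite S"
  shows "(\<Sum>r\<in>S. h r) = (\<Sum>v\<in>\<phi> ` S. \<Sum>z\<in>UNIV. \<Sum>r\<in>{r\<in>S. \<phi> r = v \<and> Zf r = z}. h r)"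
proof -
  have "(\<Sum>r\<in>S. h r) = (\<Sum>v\<in>\<phi> ` S. \<Sum>r\<in>{r\<in>S. \<phi> r = v}. h r)"
    using assms by (rule sum.image_gen)
  also have "\<dots> = (\<Sum>v\<in>\<phi> ` S. \<Sum>z\<in>UNIV. \<Sum>r\<in>{r\<in>S. \<phi> r = v \<and> Zf r = z}. h r)"
  proof (rule sum.cong[OF refl])
    fix v
    have "(\<Sum>r\<in>{r\<in>S. \<phi> r = v}. h r)
        = (\<Sum>z\<in>Zf ` {r\<in>S. \<phi> r = v}. \<Sum>r\<in>{r'\<in>{r\<in>S. \<phi> r = v}. Zf r' = z}. h r)"
      using assms by (intro sum.image_gen) auto
    also have "\<dots> = (\<Sum>z\<in>UNIV. \<Sum>r\<in>{r'\<in>{r\<in>S. \<phi> r = v}. Zf r' = z}. h r)"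
      by (rule sum.mono_neutral_left) (auto intro!: sum.neutral intro: rev_image_eqI)
    finally show "(\<Sum>r\<in>{r\<in>S. \<phi> r = v}. h r) = (\<Sum>z\<in>UNIV. \<Sum>r\<in>{r\<in>S. \<phi> r = v \<and> Zf r = z}. h r)"
      by (simp add: conj_assoc)
  qed
  finally show ?thesis .
qed

lemma mp_lump:
  fixes \<phi> :: "'a \<Rightarrow> 'b" and Zf :: "'a \<Rightarrow> 'c::finite"
  assumes fin: "finite S"
    and G: "\<And>r v z. r \<in> S \<Longrightarrow> (\<Sum>y\<in>{y\<in>S. \<phi> y = v \<and> Zf y = z}. Q r y)
            = (if Zf r = z then QV (\<phi> r) v else 0) + (if \<phi> r = v then QZ (Zf r) z else 0)"
    and x: "x \<in> S" and v: "v \<in> \<phi> ` S"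
  shows "(\<Sum>y\<in>{y\<in>S. \<phi> y = v \<and> Zf y = z}. mp S Q k x y)
       = (\<Sum>i\<le>k. real (k choose i) * (mp (\<phi> ` S) QV i (\<phi> x) v * mp UNIV QZ (k - i) (Zf x) z))"
  using v
proof (induction k arbitrary: v z)
  case 0
  have "(\<Sum>y\<in>{y\<in>S. \<phi> y = v \<and> Zf y = z}. mp S Q 0 x y) = (if \<phi> x = v \<and> Zf x = z then 1 else 0)"
    using fin x by (simp add: sum.delta)
  then show ?case by simp
next
  case (Suc k)
  define F where "F v z = {y\<in>S. \<phi> y = v \<and> Zf y = z}" for v z
  define T where "T i j v z = mp (\<phi> ` S) QV i (\<phi> x) v * mp UNIV QZ j (Zf x) z" for i j v z
  have finF: "finite (F v z)" for v z unfolding F_def using fin by auto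
  have "(\<Sum>y\<in>F v z. mp S Q (Suc k) x y) = (\<Sum>y\<in>F v z. \<Sum>r\<in>S. mp S Q k x r * Q r y)" by simp
  also have "\<dots> = (\<Sum>r\<in>S. mp S Q k x r * (\<Sum>y\<in>F v z. Q r y))"
    by (subst sum.swap) (simp add: sum_distrib_left)
  also have "\<dots> = (\<Sum>r\<in>S. mp S Q k x r * ((if Zf r = z then QV (\<phi> r) v else 0) + (if \<phi> r = v then QZ (Zf r) z else 0)))"
    using G unfolding F_def by simp
  also have "\<dots> = (\<Sum>v'\<in>\<phi> ` S. \<Sum>z'\<in>UNIV. \<Sum>r\<in>F v' z'. mp S Q k x r * ((if Zf r = z then QV (\<phi> r) v else 0) + (if \<phi> r = v then QZ (Zf r) z else 0)))"
    unfolding F_def using fin by (rule sum_fibers)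
  also have "\<dots> = (\<Sum>v'\<in>\<phi> ` S. \<Sum>z'\<in>UNIV. (\<Sum>r\<in>F v' z'. mp S Q k x r) * ((if z' = z then QV v' v else 0) + (if v' = v then QZ z' z else 0)))"
    unfolding F_def by (intro sum.cong refl) (auto simp: sum_distrib_right)
  also have "\<dots> = (\<Sum>v'\<in>\<phi> ` S. \<Sum>z'\<in>UNIV. (\<Sum>i\<le>k. real (k choose i) * T i (k - i) v' z') * ((if z' = z then QV v' v else 0) + (if v' = v then QZ z' z else 0)))"
    using Suc.IH unfolding F_def T_def by (intro sum.cong refl) auto
  also have "\<dots> = (\<Sum>i\<le>k. real (k choose i) * (\<Sum>v'\<in>\<phi> ` S. \<Sum>z'\<in>UNIV. T i (k - i) v' z' * ((if z' = z then QV v' v else 0) + (if v' = v then QZ z' z else 0))))"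
    by (simp add: sum_distrib_left sum_distrib_right sum.swap[of _ "{..k}"] sum.distrib algebra_simps)
  also have "\<dots> = (\<Sum>i\<le>k. real (k choose i) * (T (Suc i) (k - i) v z + T i (Suc k - i) v z))"
  proof (rule sum.cong[OF refl])
    fix i assume "i \<in> {..k}"
    then have ki: "Suc k - i = Suc (k - i)" by auto
    have "(\<Sum>v'\<in>\<phi> ` S. \<Sum>z'\<in>UNIV. T i (k - i) v' z' * ((if z' = z then QV v' v else 0) + (if v' = v then QZ z' z else 0)))
       = (\<Sum>v'\<in>\<phi> ` S. T i (k - i) v' z * QV v' v) + (\<Sum>v'\<in>\<phi> ` S. if v' = v then (\<Sum>z'\<in>UNIV. T i (k - i) v' z' * QZ z' z) else 0)"
    proof -
      have a1: "T i (k - i) v' z' * ((if z' = z then QV v' v else 0) + (if v' = v then QZ z' z else 0))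
          = (if z' = z then T i (k - i) v' z' * QV v' v else 0) + (if v' = v then T i (k - i) v' z' * QZ z' z else 0)" for v' z'
        by (simp add: distrib_left)
      have a2: "(\<Sum>z'\<in>UNIV. (if z' = z then T i (k - i) v' z' * QV v' v else 0)) = T i (k - i) v' z * QV v' v" for v'
        by (simp add: sum.delta)
      have a3: "(\<Sum>z'\<in>UNIV. (if v' = v then T i (k - i) v' z' * QZ z' z else 0)) = (if v' = v then (\<Sum>z'\<in>UNIV. T i (k - i) v' z' * QZ z' z) else 0)" for v'
        by simp
      show ?thesis unfolding a1 sum.distrib a2 a3 by simp
    qed
    also have "\<dots> = (\<Sum>v'\<in>\<phi> ` S. T i (k - i) v' z * QV v' v) + (\<Sum>z'\<in>UNIV. T i (k - i) v z' * QZ z' z)"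
      using Suc.prems fin by (simp add: sum.delta)
    also have "\<dots> = T (Suc i) (k - i) v z + T i (Suc k - i) v z"
      unfolding T_def ki by (simp add: sum_distrib_left sum_distrib_right algebra_simps)
    finally show "real (k choose i) * (\<Sum>v'\<in>\<phi> ` S. \<Sum>z'\<in>UNIV. T i (k - i) v' z' * ((if z' = z then QV v' v else 0) + (if v' = v then QZ z' z else 0)))
        = real (k choose i) * (T (Suc i) (k - i) v z + T i (Suc k - i) v z)" by simp
  qed
  also have "\<dots> = (\<Sum>i\<le>Suc k. real (Suc k choose i) * T i (Suc k - i) v z)"
    by (rule pascal_sum[symmetric])
  finally show ?case unfolding F_def T_def .
qed


lemma tp_lump:
  fixes \<phi> :: "'a \<Rightarrow> 'b" and Zf :: "'a \<Rightarrow> 'c::finite"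
  assumes fin: "finite S"
    and G: "\<And>r v z. r \<in> S \<Longrightarrow> (\<Sum>y\<in>{y\<in>S. \<phi> y = v \<and> Zf y = z}. Q r y)
            = (if Zf r = z then QV (\<phi> r) v else 0) + (if \<phi> r = v then QZ (Zf r) z else 0)"
    and x: "x \<in> S" and v: "v \<in> \<phi> ` S"
  shows "(\<Sum>y\<in>{y\<in>S. \<phi> y = v \<and> Zf y = z}. tp S Q t x y)
       = tp (\<phi> ` S) QV t (\<phi> x) v * tp UNIV QZ t (Zf x) z"
proof -
  define F where "F = {y\<in>S. \<phi> y = v \<and> Zf y = z}"
  define \<alpha> where "\<alpha> i = t ^ i / fact i * mp (\<phi> ` S) QV i (\<phi> x) v" for i
  define \<beta> where "\<beta> j = t ^ j / fact j * mp UNIV QZ j (Zf x) z" for j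
  have finF: "finite F" unfolding F_def using fin by auto
  have sa: "summable (\<lambda>k. norm (\<alpha> k))" unfolding \<alpha>_def using fin by (intro mp_summable) auto
  have sb: "summable (\<lambda>k. norm (\<beta> k))" unfolding \<beta>_def by (intro mp_summable) auto
  have "(\<Sum>y\<in>F. tp S Q t x y) = (\<Sum>y\<in>F. \<Sum>k. t ^ k / fact k * mp S Q k x y)"
    unfolding tp_def ..
  also have "\<dots> = (\<Sum>k. \<Sum>y\<in>F. t ^ k / fact k * mp S Q k x y)"
    by (rule suminf_sum[symmetric]) (rule summable_norm_cancel[OF mp_summable[OF fin]])
  also have "\<dots> = (\<Sum>k. \<Sum>i\<le>k. \<alpha> i * \<beta> (k - i))"
  proof (rule suminf_cong)
    fix k
    have "(\<Sum>y\<in>F. t ^ k / fact k * mp S Q k x y) = t ^ k / fact k * (\<Sum>y\<in>F. mp S Q k x y)"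
      by (simp add: sum_distrib_left)
    also have "\<dots> = t ^ k / fact k * (\<Sum>i\<le>k. real (k choose i) * (mp (\<phi> ` S) QV i (\<phi> x) v * mp UNIV QZ (k - i) (Zf x) z))"
      unfolding F_def using mp_lump[OF fin G x v] by simp
    also have "\<dots> = (\<Sum>i\<le>k. \<alpha> i * \<beta> (k - i))"
      unfolding sum_distrib_left
    proof (rule sum.cong[OF refl])
      fix i assume "i \<in> {..k}"
      then have ik: "i \<le> k" by simp
      have e: "t ^ k / fact k * real (k choose i) = t ^ i / fact i * (t ^ (k - i) / fact (k - i))"
        using ik by (simp add: binomial_fact power_add[symmetric] field_simps)
      have "t ^ k / fact k * (real (k choose i) * (mp (\<phi> ` S) QV i (\<phi> x) v * mp UNIV QZ (k - i) (Zf x) z))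
          = (t ^ k / fact k * real (k choose i)) * (mp (\<phi> ` S) QV i (\<phi> x) v * mp UNIV QZ (k - i) (Zf x) z)"
        by (simp only: mult.assoc)
      also have "\<dots> = (t ^ i / fact i * (t ^ (k - i) / fact (k - i))) * (mp (\<phi> ` S) QV i (\<phi> x) v * mp UNIV QZ (k - i) (Zf x) z)"
        unfolding e ..
      also have "\<dots> = \<alpha> i * \<beta> (k - i)"
        unfolding \<alpha>_def \<beta>_def by (simp only: mult_ac)
      finally show "t ^ k / fact k * (real (k choose i) * (mp (\<phi> ` S) QV i (\<phi> x) v * mp UNIV QZ (k - i) (Zf x) z))
          = \<alpha> i * \<beta> (k - i)" .
    qed
    finally show "(\<Sum>y\<in>F. t ^ k / fact k * mp S Q k x y) = (\<Sum>i\<le>k. \<alpha> i * \<beta> (k - i))" .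
  qed
  also have "\<dots> = suminf \<alpha> * suminf \<beta>"
    by (rule Cauchy_product[OF sa sb, symmetric])
  finally show ?thesis unfolding F_def \<alpha>_def \<beta>_def tp_def .
qed


fun Hs :: "'a set \<Rightarrow> (nat \<Rightarrow> 'a \<Rightarrow> 'a \<Rightarrow> real) \<Rightarrow> (nat \<Rightarrow> 'a set) \<Rightarrow> 'a \<Rightarrow> nat \<Rightarrow> 'a \<Rightarrow> real" where
  "Hs S P E x0 0 y = (if y = x0 then 1 else 0)"
| "Hs S P E x0 (Suc k) y = (if y \<in> E k then (\<Sum>x\<in>S. Hs S P E x0 k x * P k x y) else 0)"

definition lst :: "'a \<Rightarrow> nat \<Rightarrow> (nat \<Rightarrow> 'a) \<Rightarrow> 'a" where
  "lst x0 N ss = (if N = 0 then x0 else ss (N - 1))"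

lemma lst_in:
  assumes "x0 \<in> S" "ss \<in> Pi\<^sub>E {..<N} (\<lambda>i. S \<inter> E i)"
  shows "lst x0 N ss \<in> S"
  using assms unfolding lst_def by (cases N) auto

lemma pathsum_gen:
  assumes fin: "finite S" and x0: "x0 \<in> S" and y: "y \<in> S"
  shows "(\<Sum>ss\<in>Pi\<^sub>E {..<N} (\<lambda>i. S \<inter> E i).
            (\<Prod>i<N. P i (if i = 0 then x0 else ss (i - 1)) (ss i)) * (if lst x0 N ss = y then 1 else 0))
         = Hs S P E x0 N y"
  using y
proof (induction N arbitrary: y)
  case 0
  then show ?case by (simp add: lst_def)
next
  case (Suc N)
  define F where "F = (\<lambda>i. S \<inter> E i)"
  define pr where "pr ss = (\<Prod>i<N. P i (if i = 0 then x0 else ss (i - 1)) (ss i))" for ss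
  have finPi: "finite (Pi\<^sub>E {..<N} F)" unfolding F_def using fin by (intro finite_PiE) auto
  have eqset: "Pi\<^sub>E {..<Suc N} F = (\<lambda>(u, g). g(N := u)) ` (F N \<times> Pi\<^sub>E {..<N} F)"
    using PiE_insert_eq[of N "{..<N}" F] by (simp add: lessThan_Suc)
  have inj: "inj_on (\<lambda>(u, g). g(N := u)) (F N \<times> Pi\<^sub>E {..<N} F)"
    by (rule inj_combinator) simp
  have prod_eq: "(\<Prod>i<Suc N. P i (if i = 0 then x0 else (g(N := u)) (i - 1)) ((g(N := u)) i))
        = pr g * P N (lst x0 N g) u" for g u
  proof -
    have "(\<Prod>i<N. P i (if i = 0 then x0 else (g(N := u)) (i - 1)) ((g(N := u)) i)) = pr g"
      unfolding pr_def by (intro prod.cong refl) auto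
    then show ?thesis by (cases N) (simp_all add: lst_def)
  qed
  have "(\<Sum>ss\<in>Pi\<^sub>E {..<Suc N} F.
            (\<Prod>i<Suc N. P i (if i = 0 then x0 else ss (i - 1)) (ss i)) * (if lst x0 (Suc N) ss = y then 1 else 0))
      = (\<Sum>(u, g)\<in>F N \<times> Pi\<^sub>E {..<N} F. pr g * P N (lst x0 N g) u * (if u = y then 1 else 0))"
    unfolding eqset
    apply (subst sum.reindex[OF inj])
    apply (rule sum.cong[OF refl])
    apply clarify
    apply (simp only: comp_def case_prod_conv prod_eq)
    apply (simp add: lst_def)
    done
  also have "\<dots> = (\<Sum>u\<in>F N. \<Sum>g\<in>Pi\<^sub>E {..<N} F. pr g * P N (lst x0 N g) u * (if u = y then 1 else 0))"
    by (rule sum.cartesian_product[symmetric])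
  also have "\<dots> = (if y \<in> E N then (\<Sum>g\<in>Pi\<^sub>E {..<N} F. pr g * P N (lst x0 N g) y) else 0)"
  proof -
    have "(\<Sum>u\<in>F N. \<Sum>g\<in>Pi\<^sub>E {..<N} F. pr g * P N (lst x0 N g) u * (if u = y then 1 else 0))
        = (\<Sum>u\<in>F N. if u = y then (\<Sum>g\<in>Pi\<^sub>E {..<N} F. pr g * P N (lst x0 N g) y) else 0)"
      by (intro sum.cong refl) auto
    also have "\<dots> = (if y \<in> F N then (\<Sum>g\<in>Pi\<^sub>E {..<N} F. pr g * P N (lst x0 N g) y) else 0)"
      using fin unfolding F_def by (simp add: sum.delta')
    finally show ?thesis using Suc.prems unfolding F_def by simp
  qed
  also have "\<dots> = Hs S P E x0 (Suc N) y"
  proof -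
    have "(\<Sum>x\<in>S. Hs S P E x0 N x * P N x y)
        = (\<Sum>x\<in>S. (\<Sum>g\<in>Pi\<^sub>E {..<N} F. pr g * (if lst x0 N g = x then 1 else 0)) * P N x y)"
      using Suc.IH unfolding pr_def F_def by simp
    also have "\<dots> = (\<Sum>g\<in>Pi\<^sub>E {..<N} F. \<Sum>x\<in>S. pr g * (if lst x0 N g = x then P N x y else 0))"
      unfolding sum_distrib_right
      apply (subst sum.swap)
      apply (intro sum.cong refl)
      apply simp
      done
    also have "\<dots> = (\<Sum>g\<in>Pi\<^sub>E {..<N} F. pr g * P N (lst x0 N g) y)"
    proof (rule sum.cong[OF refl])
      fix g assume g: "g \<in> Pi\<^sub>E {..<N} F"
      have "lst x0 N g \<in> S" using lst_in[OF x0] g unfolding F_def by blast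
      then show "(\<Sum>x\<in>S. pr g * (if lst x0 N g = x then P N x y else 0)) = pr g * P N (lst x0 N g) y"
        using fin by (simp add: sum_distrib_left[symmetric] sum.delta)
    qed
    finally show ?thesis by simp
  qed
  finally show ?case unfolding F_def .
qed

lemma pathsum:
  assumes fin: "finite S" and x0: "x0 \<in> S"
  shows "(\<Sum>ss\<in>Pi\<^sub>E {..<N} (\<lambda>i. S \<inter> E i). \<Prod>i<N. P i (if i = 0 then x0 else ss (i - 1)) (ss i))
         = (\<Sum>y\<in>S. Hs S P E x0 N y)"
proof -
  have "(\<Sum>y\<in>S. Hs S P E x0 N y) = (\<Sum>y\<in>S. \<Sum>ss\<in>Pi\<^sub>E {..<N} (\<lambda>i. S \<inter> E i).
            (\<Prod>i<N. P i (if i = 0 then x0 else ss (i - 1)) (ss i)) * (if lst x0 N ss = y then 1 else 0))"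
    using pathsum_gen[OF fin x0] by simp
  also have "\<dots> = (\<Sum>ss\<in>Pi\<^sub>E {..<N} (\<lambda>i. S \<inter> E i). \<Prod>i<N. P i (if i = 0 then x0 else ss (i - 1)) (ss i))"
    apply (subst sum.swap)
    apply (rule sum.cong[OF refl])
    subgoal for ss using lst_in[OF x0, of ss N E] fin
      by (simp add: sum_distrib_left[symmetric] sum.delta)
    done
  finally show ?thesis ..
qed

lemma Hs_lump:
  fixes \<phi> :: "'a \<Rightarrow> 'b" and Zf :: "'a \<Rightarrow> 'c::finite"
  assumes fin: "finite S" and x0: "x0 \<in> S"
    and L: "\<And>k x v z. x \<in> S \<Longrightarrow> v \<in> \<phi> ` S \<Longrightarrow> (\<Sum>y\<in>{y\<in>S. \<phi> y = v \<and> Zf y = z}. P k x y) = PV k (\<phi> x) v * PZ k (Zf x) z"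
    and v: "v \<in> \<phi> ` S"
  shows "(\<Sum>y\<in>{y\<in>S. \<phi> y = v \<and> Zf y = z}. Hs S P (\<lambda>k. {y. \<phi> y \<in> A k \<and> Zf y \<in> C k}) x0 N y)
       = Hs (\<phi> ` S) PV A (\<phi> x0) N v * Hs UNIV PZ C (Zf x0) N z"
  using v
proof (induction N arbitrary: v z)
  case 0
  then show ?case using fin x0 by (simp add: sum.delta)
next
  case (Suc N)
  define E where "E = (\<lambda>k. {y. \<phi> y \<in> A k \<and> Zf y \<in> C k})"
  define H where "H = Hs S P E x0 N"
  define HV where "HV = Hs (\<phi> ` S) PV A (\<phi> x0) N"
  define HZ where "HZ = Hs UNIV PZ C (Zf x0) N"
  define F where "F v z = {y\<in>S. \<phi> y = v \<and> Zf y = z}" for v z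
  have "(\<Sum>y\<in>F v z. Hs S P E x0 (Suc N) y)
      = (\<Sum>y\<in>F v z. if v \<in> A N \<and> z \<in> C N then (\<Sum>x\<in>S. H x * P N x y) else 0)"
    unfolding F_def E_def H_def by (intro sum.cong refl) auto
  also have "\<dots> = (if v \<in> A N \<and> z \<in> C N then (\<Sum>x\<in>S. H x * (\<Sum>y\<in>F v z. P N x y)) else 0)"
    by (cases "v \<in> A N \<and> z \<in> C N") (simp_all only: simp_thms if_True if_False sum.swap[of _ "F v z"] sum_distrib_left sum.neutral_const)
  also have "(\<Sum>x\<in>S. H x * (\<Sum>y\<in>F v z. P N x y)) = (\<Sum>x\<in>S. H x * (PV N (\<phi> x) v * PZ N (Zf x) z))"
    unfolding F_def using L Suc.prems by simp
  also have "\<dots> = (\<Sum>v'\<in>\<phi> ` S. \<Sum>z'\<in>UNIV. \<Sum>x\<in>F v' z'. H x * (PV N (\<phi> x) v * PZ N (Zf x) z))"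
    unfolding F_def using fin by (rule sum_fibers)
  also have "\<dots> = (\<Sum>v'\<in>\<phi> ` S. \<Sum>z'\<in>UNIV. (\<Sum>x\<in>F v' z'. H x) * (PV N v' v * PZ N z' z))"
    unfolding F_def by (intro sum.cong refl) (auto simp: sum_distrib_right)
  also have "\<dots> = (\<Sum>v'\<in>\<phi> ` S. \<Sum>z'\<in>UNIV. (HV v' * HZ z') * (PV N v' v * PZ N z' z))"
    using Suc.IH unfolding F_def H_def HV_def HZ_def E_def by (intro sum.cong refl) auto
  also have "\<dots> = (\<Sum>v'\<in>\<phi> ` S. HV v' * PV N v' v) * (\<Sum>z'\<in>UNIV. HZ z' * PZ N z' z)"
    unfolding sum_product by (intro sum.cong refl) (simp only: ac_simps)
  finally have R: "(\<Sum>y\<in>F v z. Hs S P E x0 (Suc N) y) = (if v \<in> A N \<and> z \<in> C N then (\<Sum>v'\<in>\<phi> ` S. HV v' * PV N v' v) * (\<Sum>z'\<in>UNIV. HZ z' * PZ N z' z) else 0)" .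
  have R2: "Hs (\<phi> ` S) PV A (\<phi> x0) (Suc N) v * Hs UNIV PZ C (Zf x0) (Suc N) z = (if v \<in> A N \<and> z \<in> C N then (\<Sum>v'\<in>\<phi> ` S. HV v' * PV N v' v) * (\<Sum>z'\<in>UNIV. HZ z' * PZ N z' z) else 0)"
    unfolding HV_def HZ_def by (cases "v \<in> A N"; cases "z \<in> C N") simp_all
  from R R2 show ?case unfolding F_def E_def by argo
qed

lemma Hs_total:
  fixes \<phi> :: "'a \<Rightarrow> 'b" and Zf :: "'a \<Rightarrow> 'c::finite"
  assumes fin: "finite S" and x0: "x0 \<in> S"
    and L: "\<And>k x v z. x \<in> S \<Longrightarrow> v \<in> \<phi> ` S \<Longrightarrow> (\<Sum>y\<in>{y\<in>S. \<phi> y = v \<and> Zf y = z}. P k x y) = PV k (\<phi> x) v * PZ k (Zf x) z"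
  shows "(\<Sum>y\<in>S. Hs S P (\<lambda>k. {y. \<phi> y \<in> A k \<and> Zf y \<in> C k}) x0 N y)
       = (\<Sum>v\<in>\<phi> ` S. Hs (\<phi> ` S) PV A (\<phi> x0) N v) * (\<Sum>z\<in>UNIV. Hs UNIV PZ C (Zf x0) N z)"
  by (subst sum_fibers[OF fin, of _ \<phi> Zf])
     (simp add: Hs_lump[where \<phi>=\<phi> and Zf=Zf and P=P and PV=PV and PZ=PZ, OF fin x0 L] sum_product)


lemma state_eq: "x = y \<longleftrightarrow> dis x = dis y \<and> edge x = edge y \<and> aux x = aux y"
  unfolding dis_def edge_def aux_def by (auto simp: prod_eq_iff)

lemma dis_set_dis[simp]: "dis (set_dis x c v) = (dis x)(c := v)"
  and edge_set_dis[simp]: "edge (set_dis x c v) = edge x"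
  and aux_set_dis[simp]: "aux (set_dis x c v) = aux x"
  unfolding set_dis_def dis_def edge_def aux_def by auto

lemma dis_upd_edge[simp]: "dis (upd_edge x c d w) = dis x"
  and edge_upd_edge[simp]: "edge (upd_edge x c d w) = (edge x)((c, d) := w)"
  and aux_upd_edge[simp]: "aux (upd_edge x c d w) = (aux x)((c, d) := \<not> aux x (c, d))"
  unfolding upd_edge_def dis_def edge_def aux_def by auto

lemma dis_triple[simp]: "dis (f, g, h) = f" and edge_triple[simp]: "edge (f, g, h) = g"
  and aux_triple[simp]: "aux (f, g, h) = h"
  unfolding dis_def edge_def aux_def by auto

datatype evt = EInf nat | ERec nat | EOn nat nat | EOff nat nat

locale epi =
  fixes n m :: nat and grp :: "nat \<Rightarrow> nat" and B \<rho> :: "nat \<Rightarrow> nat \<Rightarrow> real"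
    and \<gamma> :: "nat \<Rightarrow> real" and lam :: real and a b :: nat
  assumes ab: "a < n" "b < n" "a \<noteq> b"
begin

abbreviation "S \<equiv> valid_states n"
abbreviation "Q \<equiv> generator n m grp B \<rho> \<gamma> lam"

definition Evs :: "evt set" where
  "Evs = EInf ` {..<n} \<union> ERec ` {..<n} \<union> (\<lambda>(c, d). EOn c d) ` ({..<n} \<times> {..<n})
         \<union> (\<lambda>(c, d). EOff c d) ` ({..<n} \<times> {..<n})"

fun en :: "state \<Rightarrow> evt \<Rightarrow> bool" where
  "en x (EInf c) = (dis x c = 0)"
| "en x (ERec c) = (dis x c = 1)"
| "en x (EOn c d) = (c \<noteq> d)"
| "en x (EOff c d) = (c \<noteq> d)"

fun tgt :: "state \<Rightarrow> evt \<Rightarrow> state" where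
  "tgt x (EInf c) = set_dis x c 1"
| "tgt x (ERec c) = set_dis x c (-1)"
| "tgt x (EOn c d) = upd_edge x c d True"
| "tgt x (EOff c d) = upd_edge x c d False"

fun rt :: "state \<Rightarrow> evt \<Rightarrow> real" where
  "rt x (EInf c) = infection_rate n m grp B x c"
| "rt x (ERec c) = \<gamma> (grp c)"
| "rt x (EOn c d) = lam * \<rho> (grp c) (grp d) / real n"
| "rt x (EOff c d) = lam * (1 - \<rho> (grp c) (grp d) / real n)"

lemma finite_Evs: "finite Evs" unfolding Evs_def by auto

lemma finite_S: "finite S"
proof -
  define P where "P = {..<n} \<times> {..<n}"
  define f where "f x = (restrict (dis x) {..<n}, restrict (edge x) P, restrict (aux x) P)" for x
  have inj: "inj_on f S"
  proof (rule inj_onI)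
    fix x y assume x: "x \<in> S" and y: "y \<in> S" and e: "f x = f y"
    have "dis x c = dis y c" for c
    proof (cases "c < n")
      case True then show ?thesis using e unfolding f_def by (metis lessThan_iff prod.inject restrict_apply')
    next
      case False then show ?thesis using x y unfolding valid_states_def by auto
    qed
    moreover have "edge x p = edge y p \<and> aux x p = aux y p" for p
    proof (cases "p \<in> P")
      case True then show ?thesis using e unfolding f_def by (metis prod.inject restrict_apply')
    next
      case False
      obtain c d where p: "p = (c, d)" by fastforce
      show ?thesis
      proof (cases "c = d")
        case True then show ?thesis using x y p unfolding valid_states_def by auto
      next
        case False then show ?thesis using x y p \<open>p \<notin> P\<close> unfolding valid_states_def P_def by auto
      qed
    qed
    ultimately show "x = y" unfolding state_eq by (auto simp: fun_eq_iff)
  qed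
  have sub: "f ` S \<subseteq> PiE {..<n} (\<lambda>_. {-1, 0, 1 :: int}) \<times> PiE P (\<lambda>_. UNIV :: bool set) \<times> PiE P (\<lambda>_. UNIV :: bool set)"
  proof
    fix y assume "y \<in> f ` S"
    then obtain x where x: "x \<in> S" and y: "y = f x" by auto
    have "\<forall>i\<in>{..<n}. dis x i \<in> {-1, 0, 1}" using x unfolding valid_states_def by auto
    then show "y \<in> PiE {..<n} (\<lambda>_. {-1, 0, 1 :: int}) \<times> PiE P (\<lambda>_. UNIV :: bool set) \<times> PiE P (\<lambda>_. UNIV :: bool set)"
      unfolding y f_def by (simp add: restrict_PiE_iff)
  qed
  have fin: "finite (PiE {..<n} (\<lambda>_. {-1, 0, 1 :: int}) \<times> PiE P (\<lambda>_. UNIV :: bool set) \<times> PiE P (\<lambda>_. UNIV :: bool set))"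
    unfolding P_def by (intro finite_cartesian_product finite_PiE) auto
  show ?thesis using finite_subset[OF sub fin] inj by (rule finite_imageD)
qed

lemma Evs_sum:
  fixes g :: "evt \<Rightarrow> real"
  shows "(\<Sum>e\<in>Evs. g e) = (\<Sum>c<n. g (EInf c)) + (\<Sum>c<n. g (ERec c))
      + (\<Sum>c<n. \<Sum>d<n. g (EOn c d)) + (\<Sum>c<n. \<Sum>d<n. g (EOff c d))"
proof -
  have i1: "inj_on EInf {..<n}" "inj_on ERec {..<n}" by (auto intro: inj_onI)
  have i2: "inj_on (\<lambda>(c, d). EOn c d) ({..<n} \<times> {..<n})" "inj_on (\<lambda>(c, d). EOff c d) ({..<n} \<times> {..<n})"
    by (auto intro!: inj_onI)
  have "(\<Sum>e\<in>Evs. g e) = (\<Sum>e\<in>EInf ` {..<n}. g e) + (\<Sum>e\<in>ERec ` {..<n}. g e)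
      + (\<Sum>e\<in>(\<lambda>(c, d). EOn c d) ` ({..<n} \<times> {..<n}). g e) + (\<Sum>e\<in>(\<lambda>(c, d). EOff c d) ` ({..<n} \<times> {..<n}). g e)"
    unfolding Evs_def
    by (subst sum.union_disjoint; (auto)?)+
  also have "\<dots> = (\<Sum>c<n. g (EInf c)) + (\<Sum>c<n. g (ERec c))
      + (\<Sum>(c, d)\<in>{..<n} \<times> {..<n}. g (EOn c d)) + (\<Sum>(c, d)\<in>{..<n} \<times> {..<n}. g (EOff c d))"
    by (simp add: sum.reindex[OF i1(1)] sum.reindex[OF i1(2)] sum.reindex[OF i2(1)] sum.reindex[OF i2(2)] comp_def prod.case_distrib)
  also have "\<dots> = (\<Sum>c<n. g (EInf c)) + (\<Sum>c<n. g (ERec c))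
      + (\<Sum>c<n. \<Sum>d<n. g (EOn c d)) + (\<Sum>c<n. \<Sum>d<n. g (EOff c d))"
    by (simp add: sum.cartesian_product)
  finally show ?thesis .
qed

lemma trans_rate_ev:
  "trans_rate n m grp B \<rho> \<gamma> lam x y = (\<Sum>e\<in>Evs. if en x e \<and> y = tgt x e then rt x e else 0)"
  unfolding Evs_sum trans_rate_def rt.simps en.simps tgt.simps by simp

lemma tgt_in: "x \<in> S \<Longrightarrow> e \<in> Evs \<Longrightarrow> en x e \<Longrightarrow> tgt x e \<in> S"
proof -
  assume x: "x \<in> S" and e: "e \<in> Evs" and en: "en x e"
  have dx: "\<forall>c. dis x c \<in> {-1, 0, 1} \<and> (c \<ge> n \<longrightarrow> dis x c = 0)"
    and ex: "\<forall>c d. \<not> (c < n \<and> d < n \<and> c \<noteq> d) \<longrightarrow> \<not> edge x (c, d) \<and> \<not> aux x (c, d)"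
    using x unfolding valid_states_def by auto
  show ?thesis using e en dx ex unfolding Evs_def valid_states_def by (cases e) auto
qed

lemma tgt_ne: "en x e \<Longrightarrow> tgt x e \<noteq> x"
  by (cases e) (auto simp: state_eq fun_eq_iff)

lemma Q_ev:
  assumes x: "x \<in> S"
  shows "Q x y = (\<Sum>e\<in>Evs. if en x e then rt x e * ((if y = tgt x e then 1 else 0) - (if y = x then 1 else 0)) else 0)"
proof (cases "y = x")
  case True
  have "(\<Sum>s''\<in>S - {x}. trans_rate n m grp B \<rho> \<gamma> lam x s'')
      = (\<Sum>s''\<in>S - {x}. \<Sum>e\<in>Evs. if s'' = tgt x e then (if en x e then rt x e else 0) else 0)"
    unfolding trans_rate_ev by (intro sum.cong refl) auto
  also have "\<dots> = (\<Sum>e\<in>Evs. \<Sum>s''\<in>S - {x}. if s'' = tgt x e then (if en x e then rt x e else 0) else 0)"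
    by (rule sum.swap)
  also have "\<dots> = (\<Sum>e\<in>Evs. if en x e then rt x e else 0)"
  proof (rule sum.cong[OF refl])
    fix e assume e: "e \<in> Evs"
    show "(\<Sum>s''\<in>S - {x}. if s'' = tgt x e then (if en x e then rt x e else 0) else 0) = (if en x e then rt x e else 0)"
      using tgt_in[OF x e] tgt_ne[of x e] finite_S by (simp add: sum.delta')
  qed
  finally have "Q x x = - (\<Sum>e\<in>Evs. if en x e then rt x e else 0)"
    unfolding generator_def by simp
  also have "\<dots> = (\<Sum>e\<in>Evs. if en x e then rt x e * ((if x = tgt x e then 1 else 0) - (if x = x then 1 else 0)) else 0)"
    unfolding sum_negf[symmetric] by (intro sum.cong refl) (auto dest: tgt_ne)
  finally show ?thesis using True by (simp only:)
next
  case False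
  then have "Q x y = (\<Sum>e\<in>Evs. if en x e \<and> y = tgt x e then rt x e else 0)"
    unfolding generator_def trans_rate_ev by simp
  also have "\<dots> = (\<Sum>e\<in>Evs. if en x e then rt x e * ((if y = tgt x e then 1 else 0) - (if y = x then 1 else 0)) else 0)"
    using False by (intro sum.cong refl) auto
  finally show ?thesis .
qed

lemma fiber_sum:
  assumes x: "x \<in> S"
  shows "(\<Sum>y\<in>{y\<in>S. P y}. Q x y)
    = (\<Sum>e\<in>Evs. if en x e then rt x e * ((if P (tgt x e) then 1 else 0) - (if P x then 1 else 0)) else 0)"
proof -
  have "(\<Sum>y\<in>{y\<in>S. P y}. Q x y) = (\<Sum>e\<in>Evs. \<Sum>y\<in>{y\<in>S. P y}. if en x e then rt x e * ((if y = tgt x e then 1 else 0) - (if y = x then 1 else 0)) else 0)"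
    unfolding Q_ev[OF x] by (rule sum.swap)
  also have "\<dots> = (\<Sum>e\<in>Evs. if en x e then rt x e * ((if P (tgt x e) then 1 else 0) - (if P x then 1 else 0)) else 0)"
  proof (rule sum.cong[OF refl])
    fix e assume e: "e \<in> Evs"
    show "(\<Sum>y\<in>{y\<in>S. P y}. if en x e then rt x e * ((if y = tgt x e then 1 else 0) - (if y = x then 1 else 0)) else 0)
        = (if en x e then rt x e * ((if P (tgt x e) then 1 else 0) - (if P x then 1 else 0)) else 0)"
    proof (cases "en x e")
      case True
      have fin: "finite {y\<in>S. P y}" using finite_S by simp
      have "(\<Sum>y\<in>{y\<in>S. P y}. rt x e * ((if y = tgt x e then 1 else 0) - (if y = x then 1 else 0)))
          = rt x e * ((\<Sum>y\<in>{y\<in>S. P y}. if y = tgt x e then 1 else 0) - (\<Sum>y\<in>{y\<in>S. P y}. if y = x then 1 else 0))"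
        by (simp add: sum_distrib_left sum_subtractf right_diff_distrib)
      also have "\<dots> = rt x e * ((if P (tgt x e) then 1 else 0) - (if P x then 1 else 0))"
        using fin tgt_in[OF x e True] x by (simp add: sum.delta')
      finally show ?thesis using True by simp
    qed simp
  qed
  finally show ?thesis .
qed

definition reset :: "state \<Rightarrow> state" where
  "reset x = (dis x, (edge x)((a, b) := False), (aux x)((a, b) := False))"
definition marker :: "int \<Rightarrow> state" where
  "marker v = ((\<lambda>_. 0)(b := v), \<lambda>_. False, \<lambda>_. False)"
definition phi :: "state \<Rightarrow> state" where
  "phi x = (if dis x b = 0 then reset x else marker (dis x b))"
definition Zf :: "state \<Rightarrow> bool \<times> bool" where
  "Zf x = (edge x (a, b), aux x (a, b))"

lemma dis_reset[simp]: "dis (reset x) = dis x"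
  and edge_reset[simp]: "edge (reset x) = (edge x)((a, b) := False)"
  and aux_reset[simp]: "aux (reset x) = (aux x)((a, b) := False)"
  unfolding reset_def by simp_all

lemma dis_marker[simp]: "dis (marker v) = (\<lambda>_. 0)(b := v)"
  and edge_marker[simp]: "edge (marker v) = (\<lambda>_. False)"
  and aux_marker[simp]: "aux (marker v) = (\<lambda>_. False)"
  unfolding marker_def by simp_all

lemma dis_phi_b[simp]: "dis (phi x) b = dis x b"
  unfolding phi_def by simp

lemma phi_phi[simp]: "phi (phi x) = phi x"
  unfolding phi_def by (auto simp: state_eq)

lemma phi_S: "x \<in> S \<Longrightarrow> phi x \<in> S"
  unfolding phi_def valid_states_def using ab by auto

lemma infection_rate_reset:
  assumes "dis x b = 0"
  shows "infection_rate n m grp B (reset x) c = infection_rate n m grp B x c"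
  unfolding infection_rate_def using assms
  by (intro sum.cong refl arg_cong[where f = "\<lambda>s. B (grp c) _ * real (card s)"] Collect_cong) auto

lemma P1:
  assumes "en x e" "Zf (tgt x e) \<noteq> Zf x"
  shows "phi (tgt x e) = phi x \<and> (e = EOn a b \<or> e = EOff a b)"
proof -
  have e: "e = EOn a b \<or> e = EOff a b"
    using assms by (cases e) (auto simp: Zf_def split: if_splits)
  have "phi (upd_edge x a b w) = phi x" for w
    unfolding phi_def by (auto simp: state_eq fun_eq_iff)
  then show ?thesis using e by auto
qed

lemma P2:
  assumes "e \<in> Evs"
  shows "(en x e \<and> phi (tgt x e) \<noteq> phi x) \<longleftrightarrow> (en (phi x) e \<and> phi (tgt (phi x) e) \<noteq> phi x)"
  using assms ab unfolding Evs_def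
  by (cases e) (auto simp: phi_def state_eq fun_eq_iff)

lemma P3:
  assumes "en x e" "phi (tgt x e) \<noteq> phi x"
  shows "phi (tgt (phi x) e) = phi (tgt x e) \<and> rt (phi x) e = rt x e"
  using assms ab
  by (cases e) (auto simp: phi_def state_eq fun_eq_iff infection_rate_reset)

definition QV :: "state \<Rightarrow> state \<Rightarrow> real" where
  "QV u v = (\<Sum>y\<in>{y\<in>S. phi y = v}. Q u y)"

definition QZ :: "bool \<times> bool \<Rightarrow> bool \<times> bool \<Rightarrow> real" where
  "QZ zz z = lam * \<rho> (grp a) (grp b) / real n * ((if z = (True, \<not> snd zz) then 1 else 0) - (if z = zz then 1 else 0))
           + lam * (1 - \<rho> (grp a) (grp b) / real n) * ((if z = (False, \<not> snd zz) then 1 else 0) - (if z = zz then 1 else 0))"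

lemma ind_split:
  assumes "pt \<noteq> px \<Longrightarrow> zt = zx"
  shows "(if pt = v \<and> zt = z then 1 else 0) - (if px = v \<and> zx = z then 1 else (0::real))
       = (if zx = z then 1 else 0) * ((if pt = v then 1 else 0) - (if px = v then 1 else 0))
         + (if px = v then 1 else 0) * ((if zt = z then 1 else 0) - (if zx = z then 1 else 0))"
  using assms by (cases "pt = px") auto

lemma G:
  assumes r: "r \<in> S"
  shows "(\<Sum>y\<in>{y\<in>S. phi y = v \<and> Zf y = z}. Q r y)
       = (if Zf r = z then QV (phi r) v else 0) + (if phi r = v then QZ (Zf r) z else 0)"
proof -
  define I1 where "I1 e = (if en r e then rt r e * ((if phi (tgt r e) = v then 1 else 0) - (if phi r = v then 1 else 0)) else 0)" for e
  define I2 where "I2 e = (if en r e then rt r e * ((if Zf (tgt r e) = z then 1 else 0) - (if Zf r = z then 1 else 0)) else 0)" for e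
  have "(\<Sum>y\<in>{y\<in>S. phi y = v \<and> Zf y = z}. Q r y)
      = (\<Sum>e\<in>Evs. if en r e then rt r e * ((if phi (tgt r e) = v \<and> Zf (tgt r e) = z then 1 else 0) - (if phi r = v \<and> Zf r = z then 1 else 0)) else 0)"
    by (rule fiber_sum[OF r])
  also have "\<dots> = (\<Sum>e\<in>Evs. (if Zf r = z then 1 else 0) * I1 e + (if phi r = v then 1 else 0) * I2 e)"
  proof (rule sum.cong[OF refl])
    fix e assume e: "e \<in> Evs"
    show "(if en r e then rt r e * ((if phi (tgt r e) = v \<and> Zf (tgt r e) = z then 1 else 0) - (if phi r = v \<and> Zf r = z then 1 else 0)) else 0)
        = (if Zf r = z then 1 else 0) * I1 e + (if phi r = v then 1 else 0) * I2 e"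
    proof (cases "en r e")
      case True
      have "phi (tgt r e) \<noteq> phi r \<Longrightarrow> Zf (tgt r e) = Zf r" using P1[OF True] by blast
      note isp = ind_split[of "phi (tgt r e)" "phi r" "Zf (tgt r e)" "Zf r" v z, OF this]
      have "rt r e * ((if phi (tgt r e) = v \<and> Zf (tgt r e) = z then 1 else 0) - (if phi r = v \<and> Zf r = z then 1 else 0))
          = rt r e * ((if Zf r = z then 1 else 0) * ((if phi (tgt r e) = v then 1 else 0) - (if phi r = v then 1 else 0))
         + (if phi r = v then 1 else 0) * ((if Zf (tgt r e) = z then 1 else 0) - (if Zf r = z then 1 else 0)))"
        by (rule arg_cong[OF isp])
      then show ?thesis unfolding I1_def I2_def using True by (simp only: if_True distrib_left mult_ac)
    qed (simp add: I1_def I2_def)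
  qed
  also have "\<dots> = (if Zf r = z then 1 else 0) * (\<Sum>e\<in>Evs. I1 e) + (if phi r = v then 1 else 0) * (\<Sum>e\<in>Evs. I2 e)"
    by (simp add: sum.distrib sum_distrib_left)
  also have "(\<Sum>e\<in>Evs. I1 e) = QV (phi r) v"
  proof -
    have "(\<Sum>e\<in>Evs. I1 e) = (\<Sum>e\<in>Evs. if en (phi r) e then rt (phi r) e * ((if phi (tgt (phi r) e) = v then 1 else 0) - (if phi (phi r) = v then 1 else 0)) else 0)"
    proof (rule sum.cong[OF refl])
      fix e assume e: "e \<in> Evs"
      show "I1 e = (if en (phi r) e then rt (phi r) e * ((if phi (tgt (phi r) e) = v then 1 else 0) - (if phi (phi r) = v then 1 else 0)) else 0)"
      proof (cases "en r e \<and> phi (tgt r e) \<noteq> phi r")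
        case True
        then have "en (phi r) e" "phi (tgt (phi r) e) \<noteq> phi r" using P2[OF e, of r] by auto
        then show ?thesis using True P3[of r e] unfolding I1_def by simp
      next
        case False
        then have "\<not> (en (phi r) e \<and> phi (tgt (phi r) e) \<noteq> phi r)" using P2[OF e, of r] by auto
        then show ?thesis using False unfolding I1_def by auto
      qed
    qed
    also have "\<dots> = QV (phi r) v"
      unfolding QV_def by (rule fiber_sum[OF phi_S[OF r], symmetric])
    finally show ?thesis .
  qed
  also have "(\<Sum>e\<in>Evs. I2 e) = QZ (Zf r) z"
  proof -
    have sub: "{EOn a b, EOff a b} \<subseteq> Evs" unfolding Evs_def using ab by auto
    have "(\<Sum>e\<in>Evs. I2 e) = (\<Sum>e\<in>{EOn a b, EOff a b}. I2 e)"
    proof (rule sum.mono_neutral_right[OF finite_Evs sub], rule ballI)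
      fix e assume "e \<in> Evs - {EOn a b, EOff a b}"
      then have "e \<noteq> EOn a b" "e \<noteq> EOff a b" by auto
      then show "I2 e = 0" unfolding I2_def using P1[of r e] by auto
    qed
    also have "\<dots> = QZ (Zf r) z"
      unfolding I2_def QZ_def using ab by (simp add: Zf_def)
    finally show ?thesis .
  qed
  finally show ?thesis by simp
qed

end


context epi begin
lemma tp_lump_model:
  assumes x: "x \<in> S" and v: "v \<in> phi ` S"
  shows "(\<Sum>y\<in>{y\<in>S. phi y = v \<and> Zf y = z}. tp S Q t x y)
       = tp (phi ` S) QV t (phi x) v * tp UNIV QZ t (Zf x) z"
  by (rule tp_lump[OF finite_S G x v])
end

locale epi_ctmc = epi n m grp B \<rho> \<gamma> lam a b + prob_space M
  for n m grp B \<rho> \<gamma> lam a b and M :: "'w measure" +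
  fixes X :: "real \<Rightarrow> 'w \<Rightarrow> state" and x0 :: state
  assumes ctmc: "is_ctmc M (valid_states n) (generator n m grp B \<rho> \<gamma> lam) x0 X"
begin

lemma x0_S: "x0 \<in> S" using ctmc unfolding is_ctmc_def by blast
lemma X_pt_meas: "t \<ge> 0 \<Longrightarrow> {\<omega>\<in>space M. X t \<omega> = s} \<in> sets M" using ctmc unfolding is_ctmc_def by blast
lemma X_S: "\<omega> \<in> space M \<Longrightarrow> t \<ge> 0 \<Longrightarrow> X t \<omega> \<in> S" using ctmc unfolding is_ctmc_def by blast
lemma X_rc: "\<omega> \<in> space M \<Longrightarrow> t \<ge> 0 \<Longrightarrow> \<exists>\<delta>>0. \<forall>u. t \<le> u \<and> u < t + \<delta> \<longrightarrow> X u \<omega> = X t \<omega>"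
  using ctmc unfolding is_ctmc_def by blast
lemma fdd:
  assumes "\<forall>i<k. 0 \<le> ts i \<and> ss i \<in> S" "\<forall>i. Suc i < k \<longrightarrow> ts i \<le> ts (Suc i)"
  shows "measure M {\<omega>\<in>space M. \<forall>i<k. X (ts i) \<omega> = ss i}
          = (\<Prod>i<k. tp S Q (ts i - (if i = 0 then 0 else ts (i - 1)))
                       (if i = 0 then x0 else ss (i - 1)) (ss i))"
  using ctmc assms unfolding is_ctmc_def trans_prob_tp by blast

lemma X_meas: "t \<ge> 0 \<Longrightarrow> {\<omega>\<in>space M. X t \<omega> \<in> W} \<in> sets M"
proof -
  assume t: "t \<ge> 0"
  have "{\<omega>\<in>space M. X t \<omega> \<in> W} = (\<Union>s\<in>S \<inter> W. {\<omega>\<in>space M. X t \<omega> = s})"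
    using X_S[OF _ t] by auto
  also have "\<dots> \<in> sets M" using finite_S X_pt_meas[OF t] by auto
  finally show ?thesis .
qed

definition dl :: "(nat \<Rightarrow> real) \<Rightarrow> nat \<Rightarrow> real" where
  "dl ts i = ts i - (if i = 0 then 0 else ts (i - 1))"

lemma cyl:
  assumes ts0: "\<forall>i<N. 0 \<le> ts i" and mono: "\<forall>i. Suc i < N \<longrightarrow> ts i \<le> ts (Suc i)"
  shows "measure M {\<omega>\<in>space M. \<forall>i<N. X (ts i) \<omega> \<in> E i}
       = (\<Sum>y\<in>S. Hs S (\<lambda>i. tp S Q (dl ts i)) E x0 N y)"
proof -
  define PS where "PS = Pi\<^sub>E {..<N} (\<lambda>i. S \<inter> E i)"
  define C where "C ss = {\<omega>\<in>space M. \<forall>i<N. X (ts i) \<omega> = ss i}" for ss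
  have finPS: "finite PS" unfolding PS_def using finite_S by (intro finite_PiE) auto
  have eq: "{\<omega>\<in>space M. \<forall>i<N. X (ts i) \<omega> \<in> E i} = (\<Union>ss\<in>PS. C ss)"
  proof (intro equalityI subsetI)
    fix \<omega> assume \<omega>: "\<omega> \<in> {\<omega>\<in>space M. \<forall>i<N. X (ts i) \<omega> \<in> E i}"
    define ss where "ss = restrict (\<lambda>i. X (ts i) \<omega>) {..<N}"
    have "ss \<in> PS" unfolding PS_def ss_def using \<omega> X_S ts0 by (auto simp: restrict_PiE_iff)
    moreover have "\<omega> \<in> C ss" unfolding C_def ss_def using \<omega> by auto
    ultimately show "\<omega> \<in> (\<Union>ss\<in>PS. C ss)" by blast
  qed (auto simp: C_def PS_def)
  have Csets: "C ss \<in> sets M" for ss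
  proof -
    have "C ss = space M \<inter> (\<Inter>i<N. {\<omega>\<in>space M. X (ts i) \<omega> = ss i})" unfolding C_def by auto
    also have "\<dots> \<in> sets M" using X_pt_meas ts0 by auto
    finally show ?thesis .
  qed
  have disj: "disjoint_family_on C PS"
    unfolding disjoint_family_on_def C_def PS_def
  proof (intro ballI impI)
    fix s1 s2 assume s1: "s1 \<in> Pi\<^sub>E {..<N} (\<lambda>i. S \<inter> E i)" and s2: "s2 \<in> Pi\<^sub>E {..<N} (\<lambda>i. S \<inter> E i)" and ne: "s1 \<noteq> s2"
    then obtain i where "i < N" "s1 i \<noteq> s2 i" using PiE_ext[OF s1 s2] by (metis lessThan_iff)
    then show "{\<omega> \<in> space M. \<forall>i<N. X (ts i) \<omega> = s1 i} \<inter> {\<omega> \<in> space M. \<forall>i<N. X (ts i) \<omega> = s2 i} = {}" by auto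
  qed
  have "measure M {\<omega>\<in>space M. \<forall>i<N. X (ts i) \<omega> \<in> E i} = (\<Sum>ss\<in>PS. measure M (C ss))"
    unfolding eq using finPS Csets disj by (intro finite_measure_finite_Union) auto
  also have "\<dots> = (\<Sum>ss\<in>PS. \<Prod>i<N. tp S Q (dl ts i) (if i = 0 then x0 else ss (i - 1)) (ss i))"
  proof (rule sum.cong[OF refl])
    fix ss assume "ss \<in> PS"
    then have "\<forall>i<N. 0 \<le> ts i \<and> ss i \<in> S" using ts0 unfolding PS_def by auto
    then show "measure M (C ss) = (\<Prod>i<N. tp S Q (dl ts i) (if i = 0 then x0 else ss (i - 1)) (ss i))"
      unfolding C_def dl_def using fdd mono by blast
  qed
  also have "\<dots> = (\<Sum>y\<in>S. Hs S (\<lambda>i. tp S Q (dl ts i)) E x0 N y)"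
    unfolding PS_def by (rule pathsum[OF finite_S x0_S])
  finally show ?thesis .
qed

lemma factor:
  assumes ts0: "\<forall>i<N. 0 \<le> ts i" and mono: "\<forall>i. Suc i < N \<longrightarrow> ts i \<le> ts (Suc i)"
  shows "measure M {\<omega>\<in>space M. \<forall>i<N. phi (X (ts i) \<omega>) \<in> A i \<and> Zf (X (ts i) \<omega>) \<in> C i}
       = (\<Sum>v\<in>phi ` S. Hs (phi ` S) (\<lambda>i. tp (phi ` S) QV (dl ts i)) A (phi x0) N v)
         * (\<Sum>z\<in>UNIV. Hs UNIV (\<lambda>i. tp UNIV QZ (dl ts i)) C (Zf x0) N z)"
proof -
  have "measure M {\<omega>\<in>space M. \<forall>i<N. phi (X (ts i) \<omega>) \<in> A i \<and> Zf (X (ts i) \<omega>) \<in> C i}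
      = measure M {\<omega>\<in>space M. \<forall>i<N. X (ts i) \<omega> \<in> {y. phi y \<in> A i \<and> Zf y \<in> C i}}" by simp
  also have "\<dots> = (\<Sum>y\<in>S. Hs S (\<lambda>i. tp S Q (dl ts i)) (\<lambda>i. {y. phi y \<in> A i \<and> Zf y \<in> C i}) x0 N y)"
    by (rule cyl[OF ts0 mono])
  also have "\<dots> = (\<Sum>v\<in>phi ` S. Hs (phi ` S) (\<lambda>i. tp (phi ` S) QV (dl ts i)) A (phi x0) N v)
         * (\<Sum>z\<in>UNIV. Hs UNIV (\<lambda>i. tp UNIV QZ (dl ts i)) C (Zf x0) N z)"
    by (rule Hs_total[OF finite_S x0_S]) (rule tp_lump_model)
  finally show ?thesis .
qed

lemma indep_fd:
  assumes ts0: "\<forall>i<N. 0 \<le> ts i" and mono: "\<forall>i. Suc i < N \<longrightarrow> ts i \<le> ts (Suc i)"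
  shows "measure M {\<omega>\<in>space M. \<forall>i<N. phi (X (ts i) \<omega>) \<in> A i \<and> Zf (X (ts i) \<omega>) \<in> C i}
       = measure M {\<omega>\<in>space M. \<forall>i<N. phi (X (ts i) \<omega>) \<in> A i}
         * measure M {\<omega>\<in>space M. \<forall>i<N. Zf (X (ts i) \<omega>) \<in> C i}"
proof -
  define fV where "fV A = (\<Sum>v\<in>phi ` S. Hs (phi ` S) (\<lambda>i. tp (phi ` S) QV (dl ts i)) A (phi x0) N v)" for A
  define fZ where "fZ C = (\<Sum>z\<in>UNIV. Hs UNIV (\<lambda>i. tp UNIV QZ (dl ts i)) C (Zf x0) N z)" for C
  have f: "measure M {\<omega>\<in>space M. \<forall>i<N. phi (X (ts i) \<omega>) \<in> A i \<and> Zf (X (ts i) \<omega>) \<in> C i} = fV A * fZ C" for A C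
    unfolding fV_def fZ_def by (rule factor[OF ts0 mono])
  have 1: "measure M {\<omega>\<in>space M. \<forall>i<N. phi (X (ts i) \<omega>) \<in> A i} = fV A * fZ (\<lambda>_. UNIV)"
    using f[of A "\<lambda>_. UNIV"] by simp
  have 2: "measure M {\<omega>\<in>space M. \<forall>i<N. Zf (X (ts i) \<omega>) \<in> C i} = fV (\<lambda>_. UNIV) * fZ C"
    using f[of "\<lambda>_. UNIV" C] by simp
  have 3: "fV (\<lambda>_. UNIV) * fZ (\<lambda>_. UNIV) = 1"
    using f[of "\<lambda>_. UNIV" "\<lambda>_. UNIV"] prob_space by simp
  have "fV A * fZ C = (fV A * fZ (\<lambda>_. UNIV)) * (fV (\<lambda>_. UNIV) * fZ C)"
  proof -
    have "fV A * fZ C = fV A * fZ C * (fV (\<lambda>_. UNIV) * fZ (\<lambda>_. UNIV))" using 3 by simp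
    then show ?thesis by (simp only: ac_simps)
  qed
  then show ?thesis using f 1 2 by simp
qed

end


lemma inf_rat:
  fixes p :: "real \<Rightarrow> 'x" and P :: "'x \<Rightarrow> bool"
  assumes rc: "\<forall>\<tau>\<ge>0. \<exists>\<delta>>0. \<forall>u. \<tau> \<le> u \<and> u < \<tau> + \<delta> \<longrightarrow> p u = p \<tau>"
  shows "Inf {ereal \<tau> | \<tau>. 0 \<le> \<tau> \<and> P (p \<tau>)} = (INF q\<in>{q\<in>\<rat>. 0 \<le> q}. if P (p q) then ereal q else \<infinity>)"
proof (rule antisym)
  show "Inf {ereal \<tau> | \<tau>. 0 \<le> \<tau> \<and> P (p \<tau>)} \<le> (INF q\<in>{q\<in>\<rat>. 0 \<le> q}. if P (p q) then ereal q else \<infinity>)"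
  proof (rule INF_greatest)
    fix q :: real assume q: "q \<in> {q\<in>\<rat>. 0 \<le> q}"
    show "Inf {ereal \<tau> | \<tau>. 0 \<le> \<tau> \<and> P (p \<tau>)} \<le> (if P (p q) then ereal q else \<infinity>)"
      using q by (auto intro!: Inf_lower)
  qed
next
  show "(INF q\<in>{q\<in>\<rat>. 0 \<le> q}. if P (p q) then ereal q else \<infinity>) \<le> Inf {ereal \<tau> | \<tau>. 0 \<le> \<tau> \<and> P (p \<tau>)}"
  proof (rule Inf_greatest)
    fix x assume "x \<in> {ereal \<tau> | \<tau>. 0 \<le> \<tau> \<and> P (p \<tau>)}"
    then obtain \<tau> where x: "x = ereal \<tau>" and \<tau>: "0 \<le> \<tau>" "P (p \<tau>)" by auto
    obtain \<delta> where \<delta>: "\<delta> > 0" "\<forall>u. \<tau> \<le> u \<and> u < \<tau> + \<delta> \<longrightarrow> p u = p \<tau>" using rc \<tau> by blast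
    show "(INF q\<in>{q\<in>\<rat>. 0 \<le> q}. if P (p q) then ereal q else \<infinity>) \<le> x"
      unfolding x
    proof (rule ereal_le_epsilon2)
      fix e :: real assume e: "0 < e"
      obtain q where q: "q \<in> \<rat>" "\<tau> < q" "q < \<tau> + min \<delta> e"
      proof -
        have "\<tau> < \<tau> + min \<delta> e" using e \<delta>(1) by simp
        from Rats_dense_in_real[OF this] show ?thesis by (elim bexE conjE) (rule that)
      qed
      have "\<tau> \<le> q \<and> q < \<tau> + \<delta>" using q by auto
      then have pq: "p q = p \<tau>" by (rule \<delta>(2)[rule_format])
      have "(INF q\<in>{q\<in>\<rat>. 0 \<le> q}. if P (p q) then ereal q else \<infinity>) \<le> (if P (p q) then ereal q else \<infinity>)"
        using q \<tau> by (intro INF_lower) auto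
      also have "\<dots> = ereal q" using pq \<tau> by simp
      also have "\<dots> \<le> ereal \<tau> + ereal e" using q by simp
      finally show "(INF q\<in>{q\<in>\<rat>. 0 \<le> q}. if P (p q) then ereal q else \<infinity>) \<le> ereal \<tau> + ereal e" .
    qed
  qed
qed

lemma W_less:
  fixes g :: "real \<Rightarrow> 'y"
  assumes t: "t \<ge> 0"
    and rc: "\<forall>\<tau>\<ge>0. \<exists>\<delta>>0. \<forall>u. \<tau> \<le> u \<and> u < \<tau> + \<delta> \<longrightarrow> g u = g \<tau>"
  shows "Inf {s. 0 \<le> s \<and> s \<le> t \<and> (\<forall>\<tau>. s \<le> \<tau> \<and> \<tau> \<le> t \<longrightarrow> g \<tau> = g t)} < r
     \<longleftrightarrow> (\<exists>q\<in>insert t {q\<in>\<rat>. 0 \<le> q \<and> q \<le> t}. q < r \<and> (\<forall>\<tau>\<in>{\<tau>\<in>\<rat>. q \<le> \<tau> \<and> \<tau> \<le> t}. g \<tau> = g t))"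
proof -
  define W where "W = {s. 0 \<le> s \<and> s \<le> t \<and> (\<forall>\<tau>. s \<le> \<tau> \<and> \<tau> \<le> t \<longrightarrow> g \<tau> = g t)}"
  define D where "D = insert t {q\<in>\<rat>. 0 \<le> q \<and> q \<le> t}"
  define C where "C q = (\<forall>\<tau>\<in>{\<tau>\<in>\<rat>. q \<le> \<tau> \<and> \<tau> \<le> t}. g \<tau> = g t)" for q
  have Wi: "s \<in> W \<longleftrightarrow> 0 \<le> s \<and> s \<le> t \<and> (\<forall>\<tau>. s \<le> \<tau> \<and> \<tau> \<le> t \<longrightarrow> g \<tau> = g t)" for s
    unfolding W_def by (simp only: mem_Collect_eq)
  have tW: "t \<in> W"
  proof -
    have "\<forall>\<tau>. t \<le> \<tau> \<and> \<tau> \<le> t \<longrightarrow> g \<tau> = g t" by (metis order_antisym)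
    then show ?thesis unfolding Wi using t order_refl by blast
  qed
  have bdd: "bdd_below W" by (rule bdd_belowI[of _ 0]) (simp only: Wi)
  have Dq: "q \<in> D \<Longrightarrow> 0 \<le> q \<and> q \<le> t" for q unfolding D_def using t by auto
  have memW: "q \<in> W \<longleftrightarrow> (0 \<le> q \<and> q \<le> t \<and> C q)" for q
  proof
    assume "q \<in> W" then show "0 \<le> q \<and> q \<le> t \<and> C q"
      unfolding Wi C_def by blast
  next
    assume H: "0 \<le> q \<and> q \<le> t \<and> C q"
    have "g \<tau> = g t" if "q \<le> \<tau>" "\<tau> \<le> t" for \<tau>
    proof (rule ccontr)
      assume ne: "g \<tau> \<noteq> g t"
      then have "\<tau> \<noteq> t" by blast
      then have "\<tau> < t" using that by linarith
      have "\<tau> \<ge> 0" using H that by linarith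
      then obtain \<delta> where \<delta>: "\<delta> > 0" "\<forall>u. \<tau> \<le> u \<and> u < \<tau> + \<delta> \<longrightarrow> g u = g \<tau>" using rc by blast
      obtain r where r: "r \<in> \<rat>" "\<tau> < r" "r < min (\<tau> + \<delta>) t"
      proof -
        have "\<tau> < min (\<tau> + \<delta>) t" using \<delta>(1) \<open>\<tau> < t\<close> by simp
        from Rats_dense_in_real[OF this] show ?thesis by (elim bexE conjE) (rule that)
      qed
      have "\<tau> \<le> r \<and> r < \<tau> + \<delta>" using r by auto
      then have "g r = g \<tau>" by (rule \<delta>(2)[rule_format])
      moreover have "r \<in> {\<tau>\<in>\<rat>. q \<le> \<tau> \<and> \<tau> \<le> t}" using r that by auto
      then have "g r = g t" using H unfolding C_def by blast
      ultimately show False using ne by simp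
    qed
    then show "q \<in> W" unfolding Wi using H by blast
  qed
  have "Inf W < r \<longleftrightarrow> (\<exists>s\<in>W. s < r)"
    using tW bdd by (intro cInf_less_iff) auto
  also have "\<dots> \<longleftrightarrow> (\<exists>q\<in>D. q < r \<and> q \<in> W)"
  proof
    assume "\<exists>s\<in>W. s < r"
    then obtain s where s: "s \<in> W" "s < r" by blast
    have s0: "0 \<le> s" "s \<le> t" and sall: "\<forall>\<tau>. s \<le> \<tau> \<and> \<tau> \<le> t \<longrightarrow> g \<tau> = g t"
      using s(1) unfolding Wi by blast+
    show "\<exists>q\<in>D. q < r \<and> q \<in> W"
    proof (cases "s < t")
      case False
      then have "s = t" using s0 by linarith
      then show ?thesis using s tW unfolding D_def by blast
    next
      case True
      obtain q where q: "q \<in> \<rat>" "s < q" "q < min r t"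
      proof -
        have "s < min r t" using True s by simp
        from Rats_dense_in_real[OF this] show ?thesis by (elim bexE conjE) (rule that)
      qed
      have qW: "q \<in> W" unfolding Wi
      proof (intro conjI allI impI)
        show "0 \<le> q" using q s0 by linarith
        show "q \<le> t" using q by linarith
        fix \<tau> assume "q \<le> \<tau> \<and> \<tau> \<le> t"
        then have "s \<le> \<tau> \<and> \<tau> \<le> t" using q by linarith
        then show "g \<tau> = g t" using sall by blast
      qed
      have "q \<in> D" unfolding D_def using q s0 by auto
      then show ?thesis using qW q by auto
    qed
  qed blast
  also have "\<dots> \<longleftrightarrow> (\<exists>q\<in>D. q < r \<and> C q)"
    using memW Dq by blast
  finally show ?thesis unfolding W_def D_def C_def .
qed


context epi_ctmc begin

definition Fs :: "(state \<Rightarrow> 'z) \<Rightarrow> 'w set set" where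
  "Fs h = {{\<omega>\<in>space M. \<forall>s\<in>J. h (X s \<omega>) \<in> AA s} | J AA. finite J \<and> (\<forall>s\<in>J. 0 \<le> s)}"

lemma Fs_sets: "Fs h \<subseteq> sets M"
proof
  fix E assume "E \<in> Fs h"
  then obtain J AA where E: "E = {\<omega>\<in>space M. \<forall>s\<in>J. h (X s \<omega>) \<in> AA s}" and J: "finite J" "\<forall>s\<in>J. 0 \<le> s"
    unfolding Fs_def by blast
  have "{\<omega>\<in>space M. h (X s \<omega>) \<in> AA s} \<in> sets M" if "s \<in> J" for s
    using X_meas[of s "{y. h y \<in> AA s}"] J that by simp
  then show "E \<in> sets M" unfolding E using J by (intro sets.sets_Collect_finite_All) auto
qed

lemma Fs_pow: "Fs h \<subseteq> Pow (space M)"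
  using Fs_sets sets.sets_into_space by blast

lemma Fs_Int_stable: "Int_stable (Fs h)"
proof (rule Int_stableI)
  fix E1 E2 assume "E1 \<in> Fs h" "E2 \<in> Fs h"
  then obtain J1 A1 J2 A2 where E1: "E1 = {\<omega>\<in>space M. \<forall>s\<in>J1. h (X s \<omega>) \<in> A1 s}" and J1: "finite J1" "\<forall>s\<in>J1. 0 \<le> s"
    and E2: "E2 = {\<omega>\<in>space M. \<forall>s\<in>J2. h (X s \<omega>) \<in> A2 s}" and J2: "finite J2" "\<forall>s\<in>J2. 0 \<le> s"
    unfolding Fs_def by blast
  define AA where "AA s = (if s \<in> J1 then A1 s else UNIV) \<inter> (if s \<in> J2 then A2 s else UNIV)" for s
  have "E1 \<inter> E2 = {\<omega>\<in>space M. \<forall>s\<in>J1 \<union> J2. h (X s \<omega>) \<in> AA s}"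
    unfolding E1 E2 AA_def by auto
  then show "E1 \<inter> E2 \<in> Fs h" unfolding Fs_def using J1 J2 by blast
qed

lemma Fs_single: "s \<ge> 0 \<Longrightarrow> {\<omega>\<in>space M. h (X s \<omega>) \<in> W} \<in> Fs h"
  unfolding Fs_def by (rule CollectI, rule exI[of _ "{s}"], rule exI[of _ "\<lambda>_. W"]) auto

lemma all_sorted:
  assumes "finite J"
  shows "(\<forall>s\<in>J. P s) \<longleftrightarrow> (\<forall>i<length (sorted_list_of_set J). P (sorted_list_of_set J ! i))"
  using assms by (metis all_set_conv_all_nth set_sorted_list_of_set)

lemma indep_FV_FZ: "indep_set (Fs phi) (Fs Zf)"
  unfolding indep_sets2_eq
proof (intro conjI ballI)
  show "Fs phi \<subseteq> events" "Fs Zf \<subseteq> events" using Fs_sets by auto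
  fix E1 E2 assume "E1 \<in> Fs phi" "E2 \<in> Fs Zf"
  then obtain J1 A1 J2 A2 where E1: "E1 = {\<omega>\<in>space M. \<forall>s\<in>J1. phi (X s \<omega>) \<in> A1 s}" and J1: "finite J1" "\<forall>s\<in>J1. 0 \<le> s"
    and E2: "E2 = {\<omega>\<in>space M. \<forall>s\<in>J2. Zf (X s \<omega>) \<in> A2 s}" and J2: "finite J2" "\<forall>s\<in>J2. 0 \<le> s"
    unfolding Fs_def by blast
  define J where "J = J1 \<union> J2"
  define xs where "xs = sorted_list_of_set J"
  define N where "N = length xs"
  define ts where "ts i = xs ! i" for i
  have finJ: "finite J" unfolding J_def using J1 J2 by auto
  have setxs: "set xs = J" unfolding xs_def using finJ by simp
  have ts0: "\<forall>i<N. 0 \<le> ts i" unfolding ts_def N_def using setxs J1 J2 J_def nth_mem by blast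
  have mono: "\<forall>i. Suc i < N \<longrightarrow> ts i \<le> ts (Suc i)"
    unfolding ts_def N_def xs_def by (auto intro: sorted_nth_mono)
  define A where "A i = (if ts i \<in> J1 then A1 (ts i) else UNIV)" for i
  define C where "C i = (if ts i \<in> J2 then A2 (ts i) else UNIV)" for i
  have allJ: "(\<forall>s\<in>J. P s) \<longleftrightarrow> (\<forall>i<N. P (ts i))" for P
    unfolding N_def ts_def xs_def by (rule all_sorted[OF finJ])
  have e1: "E1 = {\<omega>\<in>space M. \<forall>i<N. phi (X (ts i) \<omega>) \<in> A i}"
  proof -
    have "E1 = {\<omega>\<in>space M. \<forall>s\<in>J. s \<in> J1 \<longrightarrow> phi (X s \<omega>) \<in> A1 s}" unfolding E1 J_def by auto
    also have "\<dots> = {\<omega>\<in>space M. \<forall>i<N. phi (X (ts i) \<omega>) \<in> A i}" unfolding allJ A_def by auto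
    finally show ?thesis .
  qed
  have e2: "E2 = {\<omega>\<in>space M. \<forall>i<N. Zf (X (ts i) \<omega>) \<in> C i}"
  proof -
    have "E2 = {\<omega>\<in>space M. \<forall>s\<in>J. s \<in> J2 \<longrightarrow> Zf (X s \<omega>) \<in> A2 s}" unfolding E2 J_def by auto
    also have "\<dots> = {\<omega>\<in>space M. \<forall>i<N. Zf (X (ts i) \<omega>) \<in> C i}" unfolding allJ C_def by auto
    finally show ?thesis .
  qed
  have e12: "E1 \<inter> E2 = {\<omega>\<in>space M. \<forall>i<N. phi (X (ts i) \<omega>) \<in> A i \<and> Zf (X (ts i) \<omega>) \<in> C i}"
    unfolding e1 e2 by auto
  show "prob (E1 \<inter> E2) = prob E1 * prob E2"
    apply (simp only: e12)
    apply (simp only: e1 e2)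
    by (rule indep_fd[OF ts0 mono])
qed

lemma indep_sigma: "indep_set (sigma_sets (space M) (Fs phi)) (sigma_sets (space M) (Fs Zf))"
  by (rule indep_set_sigma_sets[OF indep_FV_FZ Fs_Int_stable Fs_Int_stable])

lemma sets_sig: "sets (sigma (space M) (Fs h)) = sigma_sets (space M) (Fs h)"
  by (rule sets_measure_of[OF Fs_pow])

lemma space_sig: "space (sigma (space M) (Fs h)) = space M"
  by (rule space_measure_of_conv)

lemma Fs_in_sig: "E \<in> Fs h \<Longrightarrow> E \<in> sets (sigma (space M) (Fs h))"
  unfolding sets_sig by (rule sigma_sets.Basic)

lemma single_in_sig: "s \<ge> 0 \<Longrightarrow> {\<omega>\<in>space (sigma (space M) (Fs h)). P (h (X s \<omega>))} \<in> sets (sigma (space M) (Fs h))"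
  using Fs_in_sig[OF Fs_single[of s h "{y. P y}"]] unfolding space_sig by simp

lemma K_meas:
  "(\<lambda>\<omega>. K_var (\<lambda>\<tau>. X \<tau> \<omega>) b t) \<in> borel_measurable (sigma (space M) (Fs phi))"
proof -
  define N where "N = sigma (space M) (Fs phi)"
  define Dq where "Dq = {q\<in>\<rat>. 0 \<le> (q::real)}"
  define g where "g q \<omega> = (if dis (X q \<omega>) b = 1 then ereal q else \<infinity>)" for q \<omega>
  have cD: "countable Dq" unfolding Dq_def by (rule countable_subset[OF _ countable_rat]) auto
  have gm: "g q \<in> borel_measurable N" if "q \<in> Dq" for q
  proof -
    have "{\<omega>\<in>space N. dis (X q \<omega>) b = 1} = {\<omega>\<in>space N. dis (phi (X q \<omega>)) b = 1}" by simp
    also have "\<dots> \<in> sets N" unfolding N_def using that unfolding Dq_def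
      by (intro single_in_sig[where P = "\<lambda>y. dis y b = 1"]) auto
    finally show ?thesis unfolding g_def by (intro measurable_If) auto
  qed
  have Im: "(\<lambda>\<omega>. INF q\<in>Dq. g q \<omega>) \<in> borel_measurable N"
    by (rule borel_measurable_INF[OF cD gm])
  have m2: "(\<lambda>\<omega>. t - real_of_ereal (min (ereal t) (INF q\<in>Dq. g q \<omega>))) \<in> borel_measurable N"
    using Im by measurable
  show ?thesis unfolding N_def[symmetric]
  proof (rule measurable_cong[THEN iffD1, OF _ m2])
    fix \<omega> assume "\<omega> \<in> space N"
    then have \<omega>: "\<omega> \<in> space M" unfolding N_def space_sig .
    have rc: "\<forall>\<tau>\<ge>0. \<exists>\<delta>>0. \<forall>u. \<tau> \<le> u \<and> u < \<tau> + \<delta> \<longrightarrow> X u \<omega> = X \<tau> \<omega>"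
      using X_rc[OF \<omega>] by blast
    have "first_infection (\<lambda>\<tau>. X \<tau> \<omega>) b = (INF q\<in>Dq. g q \<omega>)"
      unfolding first_infection_def Dq_def g_def
      by (rule inf_rat[where p = "\<lambda>\<tau>. X \<tau> \<omega>" and P = "\<lambda>y. dis y b = 1", OF rc])
    then show "t - real_of_ereal (min (ereal t) (INF q\<in>Dq. g q \<omega>)) = K_var (\<lambda>\<tau>. X \<tau> \<omega>) b t"
      unfolding K_var_def by simp
  qed
qed

lemma TE_meas:
  assumes t: "t \<ge> 0"
  shows "(\<lambda>\<omega>. (last_update_T (\<lambda>\<tau>. X \<tau> \<omega>) a b t, edge (X t \<omega>) (a, b)))
           \<in> measurable (sigma (space M) (Fs Zf)) (borel \<Otimes>\<^sub>M count_space UNIV)"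
proof -
  define N where "N = sigma (space M) (Fs Zf)"
  define c where "c \<tau> \<omega> = (aux (X \<tau> \<omega>) (a, b) = aux (X t \<omega>) (a, b))" for \<tau> \<omega>
  define D where "D = insert t {q\<in>\<rat>. 0 \<le> q \<and> q \<le> t}"
  define R where "R q = {\<tau>\<in>\<rat>. q \<le> \<tau> \<and> \<tau> \<le> t}" for q
  define IW where "IW \<omega> = Inf {s. 0 \<le> s \<and> s \<le> t \<and> (\<forall>\<tau>. s \<le> \<tau> \<and> \<tau> \<le> t \<longrightarrow> aux (X \<tau> \<omega>) (a, b) = aux (X t \<omega>) (a, b))}" for \<omega>
  have spN: "space N = space M" unfolding N_def by (rule space_sig)
  have aux_set: "{\<omega>\<in>space N. aux (X \<tau> \<omega>) (a, b)} \<in> sets N" if "\<tau> \<ge> 0" for \<tau>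
  proof -
    have "{\<omega>\<in>space N. aux (X \<tau> \<omega>) (a, b)} = {\<omega>\<in>space N. snd (Zf (X \<tau> \<omega>))}" unfolding Zf_def by simp
    also have "\<dots> \<in> sets N" unfolding N_def using that by (intro single_in_sig[where P = snd])
    finally show ?thesis .
  qed
  have c_set: "{\<omega>\<in>space N. c \<tau> \<omega>} \<in> sets N" if "\<tau> \<ge> 0" for \<tau>
  proof -
    have "{\<omega>\<in>space N. c \<tau> \<omega>} = ({\<omega>\<in>space N. aux (X \<tau> \<omega>) (a, b)} \<inter> {\<omega>\<in>space N. aux (X t \<omega>) (a, b)})
        \<union> ((space N - {\<omega>\<in>space N. aux (X \<tau> \<omega>) (a, b)}) \<inter> (space N - {\<omega>\<in>space N. aux (X t \<omega>) (a, b)}))"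
      unfolding c_def by auto
    also have "\<dots> \<in> sets N" using aux_set[OF that] aux_set[OF t] by auto
    finally show ?thesis .
  qed
  have cD: "countable D" unfolding D_def by (intro countable_insert countable_subset[OF _ countable_rat]) auto
  have cR: "countable (R q)" for q unfolding R_def by (intro countable_subset[OF _ countable_rat]) auto
  have IWm: "IW \<in> borel_measurable N"
    unfolding borel_measurable_iff_less
  proof
    fix r
    have eq: "{\<omega>\<in>space N. IW \<omega> < r} = {\<omega>\<in>space N. \<exists>q\<in>D. q < r \<and> (\<forall>\<tau>\<in>R q. c \<tau> \<omega>)}"
    proof (intro Collect_cong conj_cong refl)
      fix \<omega> assume "\<omega> \<in> space N"
      then have \<omega>: "\<omega> \<in> space M" unfolding spN .
      have rc: "\<forall>\<tau>\<ge>0. \<exists>\<delta>>0. \<forall>u. \<tau> \<le> u \<and> u < \<tau> + \<delta> \<longrightarrow> aux (X u \<omega>) (a, b) = aux (X \<tau> \<omega>) (a, b)"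
        using X_rc[OF \<omega>] by metis
      show "IW \<omega> < r \<longleftrightarrow> (\<exists>q\<in>D. q < r \<and> (\<forall>\<tau>\<in>R q. c \<tau> \<omega>))"
        unfolding IW_def D_def R_def c_def by (rule W_less[OF t rc])
    qed
    have "{\<omega>\<in>space N. \<exists>q\<in>D. q < r \<and> (\<forall>\<tau>\<in>R q. c \<tau> \<omega>)} \<in> sets N"
    proof (rule sets.sets_Collect_countable_Ex'[OF _ cD])
      fix q assume q: "q \<in> D"
      then have q0: "q \<ge> 0" unfolding D_def using t by auto
      have "{\<omega>\<in>space N. \<forall>\<tau>\<in>R q. c \<tau> \<omega>} \<in> sets N"
      proof (rule sets.sets_Collect_countable_All'[OF _ cR])
        fix \<tau> assume "\<tau> \<in> R q"
        then have "\<tau> \<ge> 0" unfolding R_def using q0 by auto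
        then show "{\<omega>\<in>space N. c \<tau> \<omega>} \<in> sets N" by (rule c_set)
      qed
      then show "{\<omega>\<in>space N. q < r \<and> (\<forall>\<tau>\<in>R q. c \<tau> \<omega>)} \<in> sets N"
        by (cases "q < r") auto
    qed
    then show "{\<omega>\<in>space N. IW \<omega> < r} \<in> sets N" unfolding eq .
  qed
  have Em: "(\<lambda>\<omega>. edge (X t \<omega>) (a, b)) \<in> measurable N (count_space UNIV)"
    unfolding measurable_count_space_eq2_countable
  proof (intro conjI ballI)
    fix y :: bool
    have "(\<lambda>\<omega>. edge (X t \<omega>) (a, b)) -` {y} \<inter> space N = {\<omega>\<in>space N. fst (Zf (X t \<omega>)) = y}"
      unfolding Zf_def by auto
    also have "\<dots> \<in> sets N" unfolding N_def using t by (intro single_in_sig[where P = "\<lambda>z. fst z = y"])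
    finally show "(\<lambda>\<omega>. edge (X t \<omega>) (a, b)) -` {y} \<inter> space N \<in> sets N" .
  qed auto
  have "(\<lambda>\<omega>. (t - IW \<omega>, edge (X t \<omega>) (a, b))) \<in> measurable N (borel \<Otimes>\<^sub>M count_space UNIV)"
    by (intro measurable_Pair borel_measurable_diff borel_measurable_const IWm Em)
  then show ?thesis unfolding N_def last_update_T_def IW_def .
qed

end



theorem lemma5:
  fixes M :: "'w measure" and X :: "real \<Rightarrow> 'w \<Rightarrow> state"
    and n m :: nat and grp :: "nat \<Rightarrow> nat"
    and B \<rho> :: "nat \<Rightarrow> nat \<Rightarrow> real" and \<gamma> :: "nat \<Rightarrow> real" and lam :: real
    and x0 :: state and a b :: nat and t :: real
  assumes "prob_space M"
    and "n \<ge> 1"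
    and grp_range: "\<forall>c<n. grp c < m"
    and grp_onto: "\<forall>i<m. \<exists>c<n. grp c = i"
    and "\<forall>i<m. \<forall>j<m. B i j \<ge> 0"
    and "\<forall>i<m. \<forall>j<m. \<rho> i j > 0 \<and> \<rho> i j / real n \<le> 1"
    and "\<forall>i<m. \<gamma> i > 0"
    and "lam > 0"
    and "is_ctmc M (valid_states n) (generator n m grp B \<rho> \<gamma> lam) x0 X"
    and "a < n" and "b < n" and "a \<noteq> b"
    and "t \<ge> 0"
  defines "K \<equiv> \<lambda>\<omega>. K_var (\<lambda>\<tau>. X \<tau> \<omega>) b t"
    and "TE \<equiv> \<lambda>\<omega>. (last_update_T (\<lambda>\<tau>. X \<tau> \<omega>) a b t, edge (X t \<omega>) (a,b))"
  shows "K \<in> borel_measurable M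
    \<and> TE \<in> measurable M (borel \<Otimes>\<^sub>M count_space UNIV)
    \<and> (\<forall>A \<in> sets borel. \<forall>C \<in> sets (borel \<Otimes>\<^sub>M count_space UNIV).
          measure M (K -` A \<inter> TE -` C \<inter> space M)
            = measure M (K -` A \<inter> space M) * measure M (TE -` C \<inter> space M))"
proof -
  interpret E: epi_ctmc n m grp B \<rho> \<gamma> lam a b M X x0
    unfolding epi_ctmc_def epi_def epi_ctmc_axioms_def using assms(1,9-12) by blast
  have Km: "K \<in> borel_measurable (sigma (space M) (E.Fs E.phi))"
    unfolding K_def by (rule E.K_meas)
  have Tm: "TE \<in> measurable (sigma (space M) (E.Fs E.Zf)) (borel \<Otimes>\<^sub>M count_space UNIV)"
    unfolding TE_def by (rule E.TE_meas) (rule assms(13))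
  have subV: "sets (sigma (space M) (E.Fs E.phi)) \<subseteq> sets M"
    unfolding E.sets_sig by (rule sets.sigma_sets_subset[OF E.Fs_sets])
  have subZ: "sets (sigma (space M) (E.Fs E.Zf)) \<subseteq> sets M"
    unfolding E.sets_sig by (rule sets.sigma_sets_subset[OF E.Fs_sets])
  have K: "K \<in> borel_measurable M"
    using measurable_mono[OF order_refl refl subV E.space_sig] Km by blast
  have T: "TE \<in> measurable M (borel \<Otimes>\<^sub>M count_space UNIV)"
    using measurable_mono[OF order_refl refl subZ E.space_sig] Tm by blast
  have I: "measure M (K -` A \<inter> TE -` C \<inter> space M)
            = measure M (K -` A \<inter> space M) * measure M (TE -` C \<inter> space M)"
    if A: "A \<in> sets borel" and C: "C \<in> sets (borel \<Otimes>\<^sub>M count_space UNIV)" for A C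
  proof -
    have a: "K -` A \<inter> space M \<in> sigma_sets (space M) (E.Fs E.phi)"
      using measurable_sets[OF Km A] unfolding E.sets_sig E.space_sig .
    have c: "TE -` C \<inter> space M \<in> sigma_sets (space M) (E.Fs E.Zf)"
      using measurable_sets[OF Tm C] unfolding E.sets_sig E.space_sig .
    have "K -` A \<inter> TE -` C \<inter> space M = (K -` A \<inter> space M) \<inter> (TE -` C \<inter> space M)" by blast
    then show ?thesis using E.indep_setD[OF E.indep_sigma a c] by simp
  qed
  show ?thesis using K T I by blast
qed

end
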